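(* Consider a general state space model as described in the context, with observations $y_1,y_2,\dots$ held fixed. Assume that for every $t\ge 1$ the map $x\mapsto a_t(x,\cdot)$ is continuous from the state space into $L_1(\mu)$, and that for all $t$, all $x$ and all $y$, $$0<b_t(x,y)\le C(t,y)<\infty .$$ Then for every $t\ge 0$ and every $y_{1:t}$, $\|f^N_{t|t}-f_{t|t}\|_1=\int|f^N_{t|t}(x)-f_{t|t}(x)|\,d\mu(x)\to 0$ in probability as $N\to\infty$.
   Context: State space model: the state space $E$ is a complete separable metric space with Borel $\sigma$-field and a reference measure $\mu$; the observation space carries a measure $\nu$. $(X_t)_{t\ge0}$ is a Markov chain with $X_0\sim a_0(x)\,d\mu(x)$ and $X_t\mid X_{t-1}=x'\sim a_t(x',x)\,d\mu(x)$; conditionally on $(X_t)$ the $Y_t$ are independent with $Y_t\mid X_t=x\sim b_t(x,y)\,d\nu(y)$. The observations $y_1,y_2,\dots$ are fixed; $f_{t|t}=f_{t|t}(\cdot\mid y_{1:t})$ denotes the conditional density of $X_t$ given $Y_{1:t}=y_{1:t}$, given by $f_{0|0}=a_0$ and $f_{t|t}(x)\propto b_t(x,y_t)\int f_{t-1|t-1}(x')a_t(x',x)\,d\mu(x')$. Monte Carlo filter (i.i.d. version, e.g. via accept–reject): $x_{1,0},\dots,x_{N,0}$ are i.i.d. from $f^N_{0|0}=a_0$; given all particles up to time $t-1$, $x_{1,t},\dots,x_{N,t}$ are i.i.d. from the density $$f^N_{t|t}(x)\propto b_t(x,y_t)\,\frac1N\sum_{j=1}^N a_t(x_{j,t-1},x).$$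 Probabilities refer only to the randomness of the Monte Carlo sampling. *)

theory Defs
  imports "HOL-Probability.Probability"
begin

text \<open>Exact filter density f_{t|t} (observations y fixed).
  a0: initial density, a t x' x: transition density at time t,
  b t x y: observation density at time t, all w.r.t. mu (resp. nu).\<close>
primrec filt :: "'a measure \<Rightarrow> ('a \<Rightarrow> real) \<Rightarrow> (nat \<Rightarrow> 'a \<Rightarrow> 'a \<Rightarrow> real)
    \<Rightarrow> (nat \<Rightarrow> 'a \<Rightarrow> 'b \<Rightarrow> real) \<Rightarrow> (nat \<Rightarrow> 'b) \<Rightarrow> nat \<Rightarrow> 'a \<Rightarrow> real" where
  "filt \<mu> a0 a b y 0 = a0"
| "filt \<mu> a0 a b y (Suc t) =
     (let g = (\<lambda>x. b (Suc t) x (y (Suc t)) * (\<integral>x'. filt \<mu> a0 a b y t x' * a (Suc t) x' x \<partial>\<mu>))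
      in (\<lambda>x. g x / (\<integral>z. g z \<partial>\<mu>)))"

text \<open>Monte Carlo density f^N_{t|t} at time t >= 1, given the particles xs 0, ..., xs (N-1)
  of time t-1.\<close>
definition mc_dens :: "'a measure \<Rightarrow> (nat \<Rightarrow> 'a \<Rightarrow> 'a \<Rightarrow> real)
    \<Rightarrow> (nat \<Rightarrow> 'a \<Rightarrow> 'b \<Rightarrow> real) \<Rightarrow> (nat \<Rightarrow> 'b) \<Rightarrow> nat \<Rightarrow> nat \<Rightarrow> (nat \<Rightarrow> 'a) \<Rightarrow> 'a \<Rightarrow> real" where
  "mc_dens \<mu> a b y N t xs =
     (let g = (\<lambda>x. b t x (y t) * ((\<Sum>j<N. a t (xs j) x) / real N))
      in (\<lambda>x. g x / (\<integral>z. g z \<partial>\<mu>)))"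

definition filtN :: "'a measure \<Rightarrow> ('a \<Rightarrow> real) \<Rightarrow> (nat \<Rightarrow> 'a \<Rightarrow> 'a \<Rightarrow> real)
    \<Rightarrow> (nat \<Rightarrow> 'a \<Rightarrow> 'b \<Rightarrow> real) \<Rightarrow> (nat \<Rightarrow> 'b) \<Rightarrow> nat \<Rightarrow> nat \<Rightarrow> (nat \<Rightarrow> 'a) \<Rightarrow> 'a \<Rightarrow> real" where
  "filtN \<mu> a0 a b y N t xs = (if t = 0 then a0 else mc_dens \<mu> a b y N t xs)"

text \<open>Law of the particle vector (x_{1,t},...,x_{N,t}) (indexed 0..N-1) of the i.i.d. Monte Carlo
  filter: i.i.d. from a0 at time 0; given the time-t particles, i.i.d. from f^N_{t+1|t+1}.\<close>
primrec particles :: "'a measure \<Rightarrow> ('a \<Rightarrow> real) \<Rightarrow> (nat \<Rightarrow> 'a \<Rightarrow> 'a \<Rightarrow> real)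
    \<Rightarrow> (nat \<Rightarrow> 'a \<Rightarrow> 'b \<Rightarrow> real) \<Rightarrow> (nat \<Rightarrow> 'b) \<Rightarrow> nat \<Rightarrow> nat \<Rightarrow> (nat \<Rightarrow> 'a) measure" where
  "particles \<mu> a0 a b y N 0 = PiM {..<N} (\<lambda>_. density \<mu> (\<lambda>x. ennreal (a0 x)))"
| "particles \<mu> a0 a b y N (Suc t) =
     bind (particles \<mu> a0 a b y N t)
       (\<lambda>xs. PiM {..<N} (\<lambda>_. density \<mu> (\<lambda>x. ennreal (mc_dens \<mu> a b y N (Suc t) xs x))))"

definition L1_dist :: "'a measure \<Rightarrow> ('a \<Rightarrow> real) \<Rightarrow> ('a \<Rightarrow> real) \<Rightarrow> ennreal" where
  "L1_dist \<mu> f g = (\<integral>\<^sup>+x. ennreal \<bar>f x - g x\<bar> \<partial>\<mu>)"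

end

theory Submission
  imports Defs
begin


definition dens :: "'a measure \<Rightarrow> ('a \<Rightarrow> real) \<Rightarrow> bool" where
  "dens M q \<longleftrightarrow> q \<in> borel_measurable M \<and> (\<forall>x. 0 \<le> q x) \<and> (\<integral>\<^sup>+x. ennreal (q x) \<partial>M) = 1"

locale ssm = sigma_finite_measure \<mu> for \<mu> :: "'a::polish_space measure" +
  fixes \<nu> :: "'b measure"
    and a0 :: "'a \<Rightarrow> real" and a :: "nat \<Rightarrow> 'a \<Rightarrow> 'a \<Rightarrow> real"
    and b :: "nat \<Rightarrow> 'a \<Rightarrow> 'b \<Rightarrow> real" and C :: "nat \<Rightarrow> 'b \<Rightarrow> real"
    and y :: "nat \<Rightarrow> 'b"
  assumes sets_mu: "sets \<mu> = sets borel"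
    and a0_meas: "a0 \<in> borel_measurable \<mu>"
    and a0_nonneg: "\<forall>x. 0 \<le> a0 x"
    and a0_int: "(\<integral>\<^sup>+x. ennreal (a0 x) \<partial>\<mu>) = 1"
    and a_meas: "\<forall>t\<ge>1. (\<lambda>(x', x). a t x' x) \<in> borel_measurable (\<mu> \<Otimes>\<^sub>M \<mu>)"
    and a_nonneg: "\<forall>t\<ge>1. \<forall>x' x. 0 \<le> a t x' x"
    and a_int: "\<forall>t\<ge>1. \<forall>x'. (\<integral>\<^sup>+x. ennreal (a t x' x) \<partial>\<mu>) = 1"
    and b_meas: "\<forall>t\<ge>1. (\<lambda>(x, v). b t x v) \<in> borel_measurable (\<mu> \<Otimes>\<^sub>M \<nu>)"
    and b_bound: "\<forall>t x v. 0 < b t x v \<and> b t x v \<le> C t v"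
    and y_space: "\<forall>t. y t \<in> space \<nu>"
begin

lemma space_mu[simp]: "space \<mu> = UNIV"
  using sets_eq_imp_space_eq[OF sets_mu] by simp

lemma a_comp:
  assumes T: "1 \<le> T" and f: "f \<in> measurable N \<mu>" and g: "g \<in> measurable N \<mu>"
  shows "(\<lambda>w. a T (f w) (g w)) \<in> borel_measurable N"
proof -
  have "(\<lambda>w. (f w, g w)) \<in> measurable N (\<mu> \<Otimes>\<^sub>M \<mu>)"
    using f g by (rule measurable_Pair)
  from measurable_compose[OF this a_meas[rule_format, OF T]] show ?thesis by simp
qed

lemma b_comp:
  assumes T: "1 \<le> T"
  shows "(\<lambda>x. b T x (y T)) \<in> borel_measurable \<mu>"
proof -
  have "(\<lambda>x. (x, y T)) \<in> measurable \<mu> (\<mu> \<Otimes>\<^sub>M \<nu>)"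
    using y_space by (intro measurable_Pair) auto
  from measurable_compose[OF this b_meas[rule_format, OF T]] show ?thesis by simp
qed

lemma b_pos: "0 < b T x (y T)" using b_bound by auto
lemma b_le: "b T x (y T) \<le> C T (y T)" using b_bound by auto
lemma C_pos: "0 < C T (y T)" using b_bound by (meson less_le_trans)

definition nrm :: "nat \<Rightarrow> ('a \<Rightarrow> real) \<Rightarrow> 'a \<Rightarrow> real" where
  "nrm T u = (\<lambda>x. b T x (y T) * u x / (\<integral>z. b T z (y T) * u z \<partial>\<mu>))"

definition Z :: "nat \<Rightarrow> ('a \<Rightarrow> real) \<Rightarrow> real" where
  "Z T u = (\<integral>z. b T z (y T) * u z \<partial>\<mu>)"

lemma nrm_Z: "nrm T u x = b T x (y T) * u x / Z T u"
  by (simp add: nrm_def Z_def)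

lemma dens_integrable:
  assumes "u \<in> borel_measurable \<mu>" "\<forall>x. 0 \<le> u x" "(\<integral>\<^sup>+x. ennreal (u x) \<partial>\<mu>) = 1"
  shows "integrable \<mu> u"
  using assms by (intro integrableI_nonneg) auto

lemma dens_integral:
  assumes "u \<in> borel_measurable \<mu>" "\<forall>x. 0 \<le> u x" "(\<integral>\<^sup>+x. ennreal (u x) \<partial>\<mu>) = 1"
  shows "integral\<^sup>L \<mu> u = 1"
  using assms by (subst integral_eq_nn_integral) auto

lemma bu_integrable:
  assumes T: "1 \<le> T" and u: "u \<in> borel_measurable \<mu>" "\<forall>x. 0 \<le> u x" "(\<integral>\<^sup>+x. ennreal (u x) \<partial>\<mu>) = 1"
  shows "integrable \<mu> (\<lambda>x. b T x (y T) * u x)"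
proof -
  have "integrable \<mu> (\<lambda>x. C T (y T) * u x)"
    using dens_integrable[OF u] by simp
  then show ?thesis
    apply (rule Bochner_Integration.integrable_bound)
    using b_comp[OF T] u b_le[of T] b_pos[of T] C_pos[of T]
    by (auto intro!: AE_I2 mult_right_mono simp: abs_mult) (metis abs_of_pos b_pos b_le)
qed

lemma Z_pos:
  assumes T: "1 \<le> T" and u: "u \<in> borel_measurable \<mu>" "\<forall>x. 0 \<le> u x" "(\<integral>\<^sup>+x. ennreal (u x) \<partial>\<mu>) = 1"
  shows "0 < Z T u"
proof -
  have m: "(\<lambda>x. b T x (y T) * u x) \<in> borel_measurable \<mu>" using b_comp[OF T] u by auto
  have nn: "\<forall>x. 0 \<le> b T x (y T) * u x" using u b_pos by (simp add: less_imp_le)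
  have "Z T u \<noteq> 0"
  proof
    assume "Z T u = 0"
    then have "AE x in \<mu>. b T x (y T) * u x = 0"
      using integral_nonneg_eq_0_iff_AE[OF bu_integrable[OF T u]] nn unfolding Z_def by auto
    then have "AE x in \<mu>. u x = 0"
      by eventually_elim (use b_pos[of T] in \<open>metis mult_eq_0_iff order_less_irrefl\<close>)
    then have "(\<integral>\<^sup>+x. ennreal (u x) \<partial>\<mu>) = (\<integral>\<^sup>+x. 0 \<partial>\<mu>)"
      by (intro nn_integral_cong_AE) (auto elim: AE_mp)
    with u show False by simp
  qed
  moreover have "0 \<le> Z T u" unfolding Z_def using nn by auto
  ultimately show ?thesis by simp
qed

lemma dens_nrm:
  assumes T: "1 \<le> T" and u: "u \<in> borel_measurable \<mu>" "\<forall>x. 0 \<le> u x" "(\<integral>\<^sup>+x. ennreal (u x) \<partial>\<mu>) = 1"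
  shows "dens \<mu> (nrm T u)"
proof -
  have Zp: "0 < Z T u" by (rule Z_pos[OF T u])
  have m: "(\<lambda>x. b T x (y T) * u x) \<in> borel_measurable \<mu>" using b_comp[OF T] u by auto
  have nn: "\<forall>x. 0 \<le> b T x (y T) * u x" using u b_pos by (simp add: less_imp_le)
  have "(\<integral>\<^sup>+x. ennreal (nrm T u x) \<partial>\<mu>) = ennreal (integral\<^sup>L \<mu> (nrm T u))"
    unfolding nrm_Z
    using bu_integrable[OF T u] m nn Zp
    by (intro nn_integral_eq_integral) (auto intro!: divide_nonneg_pos)
  also have "integral\<^sup>L \<mu> (nrm T u) = Z T u / Z T u"
    unfolding nrm_Z by (simp add: Z_def)
  also have "\<dots> = 1" using Zp by simp
  finally show ?thesis unfolding dens_def nrm_Z using m nn Zp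
    by (auto intro!: divide_nonneg_pos)
qed

end



lemma ennreal_absdiff_le:
  fixes X Y W :: ennreal
  assumes "X < \<infinity>" "Y < \<infinity>" "X \<le> Y + W" "Y \<le> X + W"
  shows "ennreal \<bar>enn2real X - enn2real Y\<bar> \<le> W"
proof (cases "W = \<infinity>")
  case True then show ?thesis by simp
next
  case False
  obtain x where x: "X = ennreal x" "0 \<le> x" using assms(1) by (cases X) auto
  obtain yy where yy: "Y = ennreal yy" "0 \<le> yy" using assms(2) by (cases Y) auto
  obtain w where w: "W = ennreal w" "0 \<le> w" using False by (cases W) auto
  have "x \<le> yy + w" "yy \<le> x + w" using assms(3,4) x yy w by (simp_all add: ennreal_plus[symmetric] del: ennreal_plus)
  then have "\<bar>x - yy\<bar> \<le> w" by simp
  then show ?thesis using x yy w by (simp add: ennreal_leI)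
qed

context ssm begin

lemma nrm_L1_real:
  assumes T: "1 \<le> T"
    and u: "u \<in> borel_measurable \<mu>" "\<forall>x. 0 \<le> u x" "(\<integral>\<^sup>+x. ennreal (u x) \<partial>\<mu>) = 1"
    and v: "v \<in> borel_measurable \<mu>" "\<forall>x. 0 \<le> v x" "(\<integral>\<^sup>+x. ennreal (v x) \<partial>\<mu>) = 1"
  shows "(\<integral>x. \<bar>nrm T u x - nrm T v x\<bar> \<partial>\<mu>) \<le> 2 * C T (y T) / Z T v * (\<integral>x. \<bar>u x - v x\<bar> \<partial>\<mu>)"
proof -
  define B where "B x = b T x (y T)" for x
  define c where "c = C T (y T)"
  define Zu where "Zu = Z T u"
  define Zv where "Zv = Z T v"
  have Zu: "0 < Zu" unfolding Zu_def by (rule Z_pos[OF T u])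
  have Zv: "0 < Zv" unfolding Zv_def by (rule Z_pos[OF T v])
  have Bp: "\<And>x. 0 < B x" and Bc: "\<And>x. B x \<le> c" unfolding B_def c_def using b_pos b_le by auto
  have Bm[measurable]: "B \<in> borel_measurable \<mu>" unfolding B_def by (rule b_comp[OF T])
  have um[measurable]: "u \<in> borel_measurable \<mu>" and vm[measurable]: "v \<in> borel_measurable \<mu>" using u v by auto
  have iu: "integrable \<mu> u" by (rule dens_integrable[OF u])
  have iv: "integrable \<mu> v" by (rule dens_integrable[OF v])
  have iBu: "integrable \<mu> (\<lambda>x. B x * u x)" unfolding B_def by (rule bu_integrable[OF T u])
  have iBv: "integrable \<mu> (\<lambda>x. B x * v x)" unfolding B_def by (rule bu_integrable[OF T v])
  have iuv: "integrable \<mu> (\<lambda>x. \<bar>u x - v x\<bar>)" using iu iv by auto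
  have iBuv: "integrable \<mu> (\<lambda>x. B x * \<bar>u x - v x\<bar>)"
  proof -
    have "integrable \<mu> (\<lambda>x. c * \<bar>u x - v x\<bar>)" using iuv by simp
    then show ?thesis
      apply (rule Bochner_Integration.integrable_bound)
      using Bp Bc by (auto intro!: AE_I2 mult_right_mono simp: abs_mult less_imp_le) (meson abs_ge_self order_trans)
  qed
  have "(\<integral>x. \<bar>nrm T u x - nrm T v x\<bar> \<partial>\<mu>) \<le>
      (\<integral>x. B x * \<bar>u x - v x\<bar> / Zv + B x * u x * \<bar>1 / Zu - 1 / Zv\<bar> \<partial>\<mu>)"
  proof (rule integral_mono)
    show "integrable \<mu> (\<lambda>x. \<bar>nrm T u x - nrm T v x\<bar>)"
      unfolding nrm_Z B_def[symmetric] Zu_def[symmetric] Zv_def[symmetric]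
      using iBu iBv by (auto intro!: Bochner_Integration.integrable_abs Bochner_Integration.integrable_diff)
    show "integrable \<mu> (\<lambda>x. B x * \<bar>u x - v x\<bar> / Zv + B x * u x * \<bar>1 / Zu - 1 / Zv\<bar>)"
      using iBuv iBu by auto
    fix x
    have e: "B x * u x / Zu - B x * v x / Zv = B x * (u x - v x) / Zv + B x * u x * (1 / Zu - 1 / Zv)"
      using Zu Zv by (simp add: field_simps)
    have "\<bar>B x * u x / Zu - B x * v x / Zv\<bar> \<le> \<bar>B x * (u x - v x) / Zv\<bar> + \<bar>B x * u x * (1 / Zu - 1 / Zv)\<bar>"
      unfolding e by (rule abs_triangle_ineq)
    also have "\<dots> = B x * \<bar>u x - v x\<bar> / Zv + B x * u x * \<bar>1 / Zu - 1 / Zv\<bar>"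
      using Bp[of x] u(2) Zv by (simp add: abs_mult less_imp_le)
    finally show "\<bar>nrm T u x - nrm T v x\<bar> \<le> B x * \<bar>u x - v x\<bar> / Zv + B x * u x * \<bar>1 / Zu - 1 / Zv\<bar>"
      unfolding nrm_Z B_def[symmetric] Zu_def[symmetric] Zv_def[symmetric] .
  qed
  also have "\<dots> = (\<integral>x. B x * \<bar>u x - v x\<bar> \<partial>\<mu>) / Zv + Zu * \<bar>1 / Zu - 1 / Zv\<bar>"
    using iBuv iBu unfolding Zu_def Z_def B_def by simp
  also have "Zu * \<bar>1 / Zu - 1 / Zv\<bar> = \<bar>Zv - Zu\<bar> / Zv"
    using Zu Zv by (simp add: field_simps abs_div abs_mult)
  also have "\<bar>Zv - Zu\<bar> = \<bar>\<integral>x. B x * (v x - u x) \<partial>\<mu>\<bar>"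
    using iBu iBv unfolding Zu_def Zv_def Z_def B_def by (simp add: right_diff_distrib)
  also have "\<dots> \<le> (\<integral>x. \<bar>B x * (v x - u x)\<bar> \<partial>\<mu>)" by (rule integral_abs_bound)
  also have "\<dots> = (\<integral>x. B x * \<bar>u x - v x\<bar> \<partial>\<mu>)"
    using Bp by (intro Bochner_Integration.integral_cong) (auto simp: abs_mult less_imp_le abs_minus_commute)
  also have "(\<integral>x. B x * \<bar>u x - v x\<bar> \<partial>\<mu>) \<le> c * (\<integral>x. \<bar>u x - v x\<bar> \<partial>\<mu>)"
  proof -
    have "(\<integral>x. B x * \<bar>u x - v x\<bar> \<partial>\<mu>) \<le> (\<integral>x. c * \<bar>u x - v x\<bar> \<partial>\<mu>)"
      using iBuv iuv Bc by (intro integral_mono) (auto intro: mult_right_mono)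
    then show ?thesis by simp
  qed
  finally have "(\<integral>x. \<bar>nrm T u x - nrm T v x\<bar> \<partial>\<mu>) \<le> c * (\<integral>x. \<bar>u x - v x\<bar> \<partial>\<mu>) / Zv + c * (\<integral>x. \<bar>u x - v x\<bar> \<partial>\<mu>) / Zv"
    using Zv by (simp add: divide_right_mono)
  then show ?thesis unfolding c_def Zv_def by (simp add: field_simps)
qed

lemma L1_dist_eq:
  assumes "integrable \<mu> f" "integrable \<mu> g"
  shows "L1_dist \<mu> f g = ennreal (\<integral>x. \<bar>f x - g x\<bar> \<partial>\<mu>)"
  unfolding L1_dist_def using assms by (intro nn_integral_eq_integral) auto

lemma nrm_L1:
  assumes T: "1 \<le> T"
    and u: "u \<in> borel_measurable \<mu>" "\<forall>x. 0 \<le> u x" "(\<integral>\<^sup>+x. ennreal (u x) \<partial>\<mu>) = 1"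
    and v: "v \<in> borel_measurable \<mu>" "\<forall>x. 0 \<le> v x" "(\<integral>\<^sup>+x. ennreal (v x) \<partial>\<mu>) = 1"
  shows "L1_dist \<mu> (nrm T u) (nrm T v) \<le> ennreal (2 * C T (y T) / Z T v) * L1_dist \<mu> u v"
proof -
  have du: "dens \<mu> (nrm T u)" and dv: "dens \<mu> (nrm T v)" using dens_nrm T u v by auto
  have "L1_dist \<mu> (nrm T u) (nrm T v) = ennreal (\<integral>x. \<bar>nrm T u x - nrm T v x\<bar> \<partial>\<mu>)"
    using du dv unfolding dens_def by (intro L1_dist_eq dens_integrable) auto
  also have "\<dots> \<le> ennreal (2 * C T (y T) / Z T v * (\<integral>x. \<bar>u x - v x\<bar> \<partial>\<mu>))"
    by (intro ennreal_leI nrm_L1_real T u v)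
  also have "\<dots> = ennreal (2 * C T (y T) / Z T v) * L1_dist \<mu> u v"
    using C_pos[of T] Z_pos[OF T v] dens_integrable[OF u] dens_integrable[OF v]
    by (subst L1_dist_eq) (auto simp: ennreal_mult[symmetric] integral_nonneg_AE)
  finally show ?thesis .
qed

end



context ssm begin

definition prn :: "nat \<Rightarrow> ('a \<Rightarrow> real) \<Rightarrow> 'a \<Rightarrow> ennreal" where
  "prn T q z = (\<integral>\<^sup>+x. ennreal (q x * a T x z) \<partial>\<mu>)"

definition pr :: "nat \<Rightarrow> ('a \<Rightarrow> real) \<Rightarrow> 'a \<Rightarrow> real" where
  "pr T q z = (\<integral>x. q x * a T x z \<partial>\<mu>)"

lemma pp: "pair_sigma_finite \<mu> \<mu>"
  by (simp add: pair_sigma_finite_def sigma_finite_measure_axioms)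

lemma a_swap_meas:
  assumes T: "1 \<le> T"
  shows "(\<lambda>(z, x). a T x z) \<in> borel_measurable (\<mu> \<Otimes>\<^sub>M \<mu>)"
proof -
  have "(\<lambda>p. a T (snd p) (fst p)) \<in> borel_measurable (\<mu> \<Otimes>\<^sub>M \<mu>)"
    by (rule a_comp[OF T]) auto
  then show ?thesis by (simp add: case_prod_beta)
qed

lemma a_meas2:
  assumes T: "1 \<le> T"
  shows "(\<lambda>(x, z). a T x z) \<in> borel_measurable (\<mu> \<Otimes>\<^sub>M \<mu>)"
  using a_meas T by auto

lemma prn_meas:
  assumes T: "1 \<le> T" and q: "q \<in> borel_measurable \<mu>"
  shows "prn T q \<in> borel_measurable \<mu>"
proof -
  have [measurable]: "(\<lambda>(z, x). a T x z) \<in> borel_measurable (\<mu> \<Otimes>\<^sub>M \<mu>)" by (rule a_swap_meas[OF T])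
  have [measurable]: "q \<in> borel_measurable \<mu>" by fact
  have "(\<lambda>(z, x). ennreal (q x * a T x z)) \<in> borel_measurable (\<mu> \<Otimes>\<^sub>M \<mu>)"
    by measurable
  then show ?thesis unfolding prn_def[abs_def] by (rule borel_measurable_nn_integral)
qed

lemma prn_int_gen:
  assumes T: "1 \<le> T" and q: "q \<in> borel_measurable \<mu>" "\<forall>x. 0 \<le> q x"
  shows "(\<integral>\<^sup>+z. prn T q z \<partial>\<mu>) = (\<integral>\<^sup>+x. ennreal (q x) \<partial>\<mu>)"
proof -
  interpret pp: pair_sigma_finite \<mu> \<mu> by (rule pp)
  have [measurable]: "(\<lambda>(x, z). a T x z) \<in> borel_measurable (\<mu> \<Otimes>\<^sub>M \<mu>)" by (rule a_meas2[OF T])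
  have [measurable]: "q \<in> borel_measurable \<mu>" by fact
  have "(\<integral>\<^sup>+z. prn T q z \<partial>\<mu>) = (\<integral>\<^sup>+x. \<integral>\<^sup>+z. ennreal (q x * a T x z) \<partial>\<mu> \<partial>\<mu>)"
    unfolding prn_def by (rule pp.Fubini') measurable
  also have "\<dots> = (\<integral>\<^sup>+x. ennreal (q x) * (\<integral>\<^sup>+z. ennreal (a T x z) \<partial>\<mu>) \<partial>\<mu>)"
  proof (intro nn_integral_cong)
    fix x
    have "(\<lambda>z. a T x z) \<in> borel_measurable \<mu>" by (rule a_comp[OF T]) auto
    then show "(\<integral>\<^sup>+z. ennreal (q x * a T x z) \<partial>\<mu>) = ennreal (q x) * (\<integral>\<^sup>+z. ennreal (a T x z) \<partial>\<mu>)"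
      using q(2) by (simp add: ennreal_mult' nn_integral_cmult)
  qed
  also have "\<dots> = (\<integral>\<^sup>+x. ennreal (q x) \<partial>\<mu>)"
    using a_int T by simp
  finally show ?thesis .
qed

lemma dens_prn:
  assumes T: "1 \<le> T" and q: "dens \<mu> q"
  shows "prn T q \<in> borel_measurable \<mu>" "(\<integral>\<^sup>+z. prn T q z \<partial>\<mu>) = 1"
    "AE z in \<mu>. prn T q z \<noteq> \<infinity>"
proof -
  show m: "prn T q \<in> borel_measurable \<mu>" using q prn_meas[OF T] unfolding dens_def by auto
  show i: "(\<integral>\<^sup>+z. prn T q z \<partial>\<mu>) = 1" using q prn_int_gen[OF T] unfolding dens_def by auto
  show "AE z in \<mu>. prn T q z \<noteq> \<infinity>" using nn_integral_PInf_AE[OF m] i by simp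
qed

lemma pr_eq:
  assumes T: "1 \<le> T" and q: "q \<in> borel_measurable \<mu>" "\<forall>x. 0 \<le> q x"
  shows "pr T q z = enn2real (prn T q z)"
proof -
  have "(\<lambda>x. a T x z) \<in> borel_measurable \<mu>" by (rule a_comp[OF T]) auto
  then show ?thesis unfolding pr_def prn_def using q a_nonneg T
    by (intro integral_eq_nn_integral) auto
qed

lemma dens_pr:
  assumes T: "1 \<le> T" and q: "dens \<mu> q"
  shows "pr T q \<in> borel_measurable \<mu>" "\<forall>z. 0 \<le> pr T q z" "(\<integral>\<^sup>+z. ennreal (pr T q z) \<partial>\<mu>) = 1"
proof -
  have qq: "q \<in> borel_measurable \<mu>" "\<forall>x. 0 \<le> q x" using q unfolding dens_def by auto
  have e: "pr T q = (\<lambda>z. enn2real (prn T q z))" using pr_eq[OF T qq] by auto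
  show "pr T q \<in> borel_measurable \<mu>" unfolding e using dens_prn[OF T q] by measurable
  show "\<forall>z. 0 \<le> pr T q z" unfolding e by simp
  have "(\<integral>\<^sup>+z. ennreal (pr T q z) \<partial>\<mu>) = (\<integral>\<^sup>+z. prn T q z \<partial>\<mu>)"
    unfolding e using dens_prn(3)[OF T q]
    by (intro nn_integral_cong_AE) (auto elim!: AE_mp simp: ennreal_enn2real_if)
  then show "(\<integral>\<^sup>+z. ennreal (pr T q z) \<partial>\<mu>) = 1" using dens_prn(2)[OF T q] by simp
qed

lemma L1_dist_tri:
  assumes "f \<in> borel_measurable \<mu>" "g \<in> borel_measurable \<mu>" "h \<in> borel_measurable \<mu>"
  shows "L1_dist \<mu> f h \<le> L1_dist \<mu> f g + L1_dist \<mu> g h"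
proof -
  have "L1_dist \<mu> f h \<le> (\<integral>\<^sup>+x. ennreal \<bar>f x - g x\<bar> + ennreal \<bar>g x - h x\<bar> \<partial>\<mu>)"
    unfolding L1_dist_def
    by (intro nn_integral_mono) (auto simp: ennreal_plus[symmetric] simp del: ennreal_plus intro!: ennreal_leI)
  also have "\<dots> = L1_dist \<mu> f g + L1_dist \<mu> g h"
    unfolding L1_dist_def using assms by (intro nn_integral_add) auto
  finally show ?thesis .
qed

lemma L1_dist_sym: "L1_dist \<mu> f g = L1_dist \<mu> g f"
  unfolding L1_dist_def by (simp add: abs_minus_commute)

lemma pr_L1:
  assumes T: "1 \<le> T" and q: "dens \<mu> q" and h: "dens \<mu> h"
  shows "L1_dist \<mu> (pr T q) (pr T h) \<le> L1_dist \<mu> q h"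
proof -
  have qq: "q \<in> borel_measurable \<mu>" "\<forall>x. 0 \<le> q x" using q unfolding dens_def by auto
  have hh: "h \<in> borel_measurable \<mu>" "\<forall>x. 0 \<le> h x" using h unfolding dens_def by auto
  have [measurable]: "q \<in> borel_measurable \<mu>" "h \<in> borel_measurable \<mu>" using qq hh by auto
  define W where "W z = (\<integral>\<^sup>+x. ennreal (\<bar>q x - h x\<bar> * a T x z) \<partial>\<mu>)" for z
  have am: "\<And>z. (\<lambda>x. a T x z) \<in> borel_measurable \<mu>" by (rule a_comp[OF T]) auto
  have anz: "\<And>x z. 0 \<le> a T x z" using a_nonneg T by auto
  have le1: "prn T q z \<le> prn T h z + W z" for z
  proof -
    have "prn T q z \<le> (\<integral>\<^sup>+x. ennreal (h x * a T x z) + ennreal (\<bar>q x - h x\<bar> * a T x z) \<partial>\<mu>)"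
      unfolding prn_def using anz qq hh
      by (intro nn_integral_mono) (auto simp: ennreal_plus[symmetric] simp del: ennreal_plus
          intro!: ennreal_leI mult_right_mono simp flip: distrib_right)
    also have "\<dots> = prn T h z + W z" unfolding prn_def W_def using am[of z]
      by (intro nn_integral_add) auto
    finally show ?thesis .
  qed
  have le2: "prn T h z \<le> prn T q z + W z" for z
  proof -
    have "prn T h z \<le> (\<integral>\<^sup>+x. ennreal (q x * a T x z) + ennreal (\<bar>q x - h x\<bar> * a T x z) \<partial>\<mu>)"
      unfolding prn_def using anz qq hh
      by (intro nn_integral_mono) (auto simp: ennreal_plus[symmetric] simp del: ennreal_plus
          intro!: ennreal_leI mult_right_mono simp flip: distrib_right)
    also have "\<dots> = prn T q z + W z" unfolding prn_def W_def using am[of z]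
      by (intro nn_integral_add) auto
    finally show ?thesis .
  qed
  have "L1_dist \<mu> (pr T q) (pr T h) \<le> (\<integral>\<^sup>+z. W z \<partial>\<mu>)"
    unfolding L1_dist_def
  proof (intro nn_integral_mono_AE)
    show "AE z in \<mu>. ennreal \<bar>pr T q z - pr T h z\<bar> \<le> W z"
      using dens_prn(3)[OF T q] dens_prn(3)[OF T h]
    proof eventually_elim
      case (elim z)
      then show ?case unfolding pr_eq[OF T qq] pr_eq[OF T hh]
        by (intro ennreal_absdiff_le le1 le2) (auto simp: less_top)
    qed
  qed
  also have "(\<integral>\<^sup>+z. W z \<partial>\<mu>) = L1_dist \<mu> q h"
  proof -
    have "(\<integral>\<^sup>+z. W z \<partial>\<mu>) = (\<integral>\<^sup>+z. prn T (\<lambda>x. \<bar>q x - h x\<bar>) z \<partial>\<mu>)"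
      unfolding W_def prn_def ..
    also have "\<dots> = (\<integral>\<^sup>+x. ennreal \<bar>q x - h x\<bar> \<partial>\<mu>)"
      by (rule prn_int_gen[OF T]) auto
    finally show ?thesis unfolding L1_dist_def .
  qed
  finally show ?thesis .
qed

definition avg :: "nat \<Rightarrow> nat \<Rightarrow> (nat \<Rightarrow> 'a) \<Rightarrow> 'a \<Rightarrow> real" where
  "avg N T xs x = (\<Sum>j<N. a T (xs j) x) / real N"

lemma mc_dens_nrm: "mc_dens \<mu> a b y N T xs = nrm T (avg N T xs)"
  unfolding mc_dens_def nrm_def avg_def[abs_def] by (simp add: Let_def)

lemma filt_Suc: "filt \<mu> a0 a b y (Suc t) = nrm (Suc t) (pr (Suc t) (filt \<mu> a0 a b y t))"
  unfolding nrm_def pr_def[abs_def] by (simp add: Let_def)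

lemma avg_props:
  assumes T: "1 \<le> T" and N: "1 \<le> N"
  shows "avg N T xs \<in> borel_measurable \<mu>" "\<forall>x. 0 \<le> avg N T xs x"
    "(\<integral>\<^sup>+x. ennreal (avg N T xs x) \<partial>\<mu>) = 1"
proof -
  have am: "\<And>x'. (\<lambda>x. a T x' x) \<in> borel_measurable \<mu>" by (rule a_comp[OF T]) auto
  show "avg N T xs \<in> borel_measurable \<mu>" unfolding avg_def[abs_def] using am by measurable
  show "\<forall>x. 0 \<le> avg N T xs x" unfolding avg_def using a_nonneg T by (auto intro!: sum_nonneg divide_nonneg_nonneg)
  have "(\<integral>\<^sup>+x. ennreal (avg N T xs x) \<partial>\<mu>) = (\<integral>\<^sup>+x. (\<Sum>j<N. ennreal (a T (xs j) x)) * ennreal (1 / real N) \<partial>\<mu>)"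
    unfolding avg_def using a_nonneg T
    by (intro nn_integral_cong) (auto simp: ennreal_mult[symmetric] sum_nonneg divide_inverse)
  also have "\<dots> = (\<Sum>j<N. \<integral>\<^sup>+x. ennreal (a T (xs j) x) \<partial>\<mu>) * ennreal (1 / real N)"
    using am by (simp add: nn_integral_multc nn_integral_sum)
  also have "\<dots> = 1" using a_int T N by (simp add: ennreal_of_nat_eq_real_of_nat ennreal_mult[symmetric])
  finally show "(\<integral>\<^sup>+x. ennreal (avg N T xs x) \<partial>\<mu>) = 1" .
qed

end



lemma PiM_comp_nn:
  assumes P: "prob_space P" and j: "j \<in> I" and f: "f \<in> borel_measurable P"
  shows "(\<integral>\<^sup>+xs. f (xs j) \<partial>PiM I (\<lambda>_. P)) = (\<integral>\<^sup>+x. f x \<partial>P)"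
proof -
  have d: "distr (PiM I (\<lambda>_. P)) P (\<lambda>xs. xs j) = P"
    using P j by (intro distr_PiM_component) auto
  have "(\<integral>\<^sup>+x. f x \<partial>P) = (\<integral>\<^sup>+x. f x \<partial>distr (PiM I (\<lambda>_. P)) P (\<lambda>xs. xs j))" by (simp add: d)
  also have "\<dots> = (\<integral>\<^sup>+xs. f (xs j) \<partial>PiM I (\<lambda>_. P))"
    using f j by (intro nn_integral_distr) (auto simp: d)
  finally show ?thesis ..
qed

lemma PiM_comp_int:
  fixes f :: "'a \<Rightarrow> real"
  assumes P: "prob_space P" and j: "j \<in> I" and f: "f \<in> borel_measurable P"
  shows "(\<integral>xs. f (xs j) \<partial>PiM I (\<lambda>_. P)) = (\<integral>x. f x \<partial>P)"
proof -
  have d: "distr (PiM I (\<lambda>_. P)) P (\<lambda>xs. xs j) = P"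
    using P j by (intro distr_PiM_component) auto
  have "(\<integral>x. f x \<partial>P) = (\<integral>x. f x \<partial>distr (PiM I (\<lambda>_. P)) P (\<lambda>xs. xs j))" by (simp add: d)
  also have "\<dots> = (\<integral>xs. f (xs j) \<partial>PiM I (\<lambda>_. P))"
    using f j by (intro integral_distr) auto
  finally show ?thesis ..
qed

lemma PiM_cross:
  fixes f g :: "'a \<Rightarrow> real"
  assumes P: "prob_space P" and I: "finite I" and j: "j \<in> I" and k: "k \<in> I" and jk: "j \<noteq> k"
    and f: "integrable P f" and g: "integrable P g"
  shows "(\<integral>xs. f (xs j) * g (xs k) \<partial>PiM I (\<lambda>_. P)) = (\<integral>x. f x \<partial>P) * (\<integral>x. g x \<partial>P)"
proof -
  interpret P: prob_space P by fact
  interpret ps: product_sigma_finite "\<lambda>_. P"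
    by unfold_locales
  define F where "F i = (if i = j then f else if i = k then g else (\<lambda>_. 1))" for i
  have "(\<integral>xs. (\<Prod>i\<in>I. F i (xs i)) \<partial>PiM I (\<lambda>_. P)) = (\<Prod>i\<in>I. integral\<^sup>L P (F i))"
    using I f g by (intro ps.product_integral_prod) (auto simp: F_def)
  moreover have "\<And>xs. (\<Prod>i\<in>I. F i (xs i)) = f (xs j) * g (xs k)"
  proof -
    fix xs
    have "(\<Prod>i\<in>I. F i (xs i)) = (\<Prod>i\<in>{j, k}. F i (xs i))"
      using I j k by (intro prod.mono_neutral_right) (auto simp: F_def)
    also have "\<dots> = f (xs j) * g (xs k)" using jk by (simp add: F_def)
    finally show "(\<Prod>i\<in>I. F i (xs i)) = f (xs j) * g (xs k)" .
  qed
  moreover have "(\<Prod>i\<in>I. integral\<^sup>L P (F i)) = (\<Prod>i\<in>{j, k}. integral\<^sup>L P (F i))"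
    using I j k by (intro prod.mono_neutral_right) (auto simp: F_def P.prob_space)
  moreover have "(\<Prod>i\<in>{j, k}. integral\<^sup>L P (F i)) = (\<integral>x. f x \<partial>P) * (\<integral>x. g x \<partial>P)"
    using jk by (simp add: F_def)
  ultimately show ?thesis by simp
qed




lemma var_bound:
  fixes Y :: "'a \<Rightarrow> real"
  assumes P: "prob_space P" and N: "1 \<le> N" and Ym: "Y \<in> borel_measurable P"
    and Y0: "\<And>x. 0 \<le> Y x" and YM: "\<And>x. Y x \<le> M"
  shows "(\<integral>xs. ((\<Sum>j<N. Y (xs j)) / real N - (\<integral>x. Y x \<partial>P))\<^sup>2 \<partial>PiM {..<N} (\<lambda>_. P))
          \<le> M * (\<integral>x. Y x \<partial>P) / real N"
proof -
  interpret P: prob_space P by fact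
  interpret PQ: prob_space "PiM {..<N} (\<lambda>_. P)" by (intro prob_space_PiM) (auto simp: P)
  define m where "m = (\<integral>x. Y x \<partial>P)"
  define D where "D x = Y x - m" for x
  have M0: "0 \<le> M" using Y0 YM order_trans by blast
  have iY: "integrable P Y"
    using Ym Y0 YM by (intro P.integrable_const_bound[where B=M]) (auto intro!: AE_I2 simp: abs_of_nonneg)
  have m0: "0 \<le> m" unfolding m_def using Y0 by auto
  have mM: "m \<le> M" unfolding m_def using integral_mono[OF iY _ YM] by (auto simp: P.prob_space)
  have Dm[measurable]: "D \<in> borel_measurable P" unfolding D_def using Ym by auto
  have Db: "\<bar>D x\<bar> \<le> M" for x unfolding D_def using Y0[of x] YM[of x] m0 mM by auto
  have DDb: "\<bar>D x * D z\<bar> \<le> M * M" for x z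
    unfolding abs_mult using Db[of x] Db[of z] by (intro mult_mono) auto
  have iD: "integrable P D"
    using Db by (intro P.integrable_const_bound[where B=M]) auto
  have iD2: "integrable P (\<lambda>x. D x * D x)"
    using DDb by (intro P.integrable_const_bound[where B="M*M"]) (auto intro!: AE_I2 dest: abs_le_D1)
  have ID: "(\<integral>x. D x \<partial>P) = 0" unfolding D_def m_def using iY by (simp add: P.prob_space)
  have iYY: "integrable P (\<lambda>x. Y x * Y x)"
    using Ym Y0 YM M0 by (intro P.integrable_const_bound[where B="M*M"]) (auto simp: abs_mult intro!: AE_I2 mult_mono)
  have ID2: "(\<integral>x. D x * D x \<partial>P) \<le> M * m"
  proof -
    have "(\<integral>x. D x * D x \<partial>P) = (\<integral>x. Y x * Y x - 2 * m * Y x + m * m \<partial>P)"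
      unfolding D_def by (simp add: algebra_simps power2_eq_square)
    also have "\<dots> = (\<integral>x. Y x * Y x \<partial>P) - 2 * m * m + m * m"
      using iYY iY by (simp add: m_def P.prob_space)
    also have "\<dots> \<le> (\<integral>x. Y x * Y x \<partial>P)" by simp
    also have "\<dots> \<le> (\<integral>x. M * Y x \<partial>P)"
      using iYY iY Y0 YM by (intro integral_mono) (auto intro: mult_right_mono)
    also have "\<dots> = M * m" unfolding m_def by simp
    finally show ?thesis .
  qed
  have cm: "\<And>j. j < N \<Longrightarrow> (\<lambda>xs. xs j) \<in> measurable (PiM {..<N} (\<lambda>_. P)) P" by auto
  have ijk: "integrable (PiM {..<N} (\<lambda>_. P)) (\<lambda>xs. D (xs j) * D (xs k))" if "j < N" "k < N" for j k
    using DDb that by (intro PQ.integrable_const_bound[where B="M*M"]) auto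
  have Ejk: "(\<integral>xs. D (xs j) * D (xs k) \<partial>PiM {..<N} (\<lambda>_. P)) = (if j = k then (\<integral>x. D x * D x \<partial>P) else 0)"
    if "j < N" "k < N" for j k
  proof (cases "j = k")
    case True
    then show ?thesis using PiM_comp_int[OF P, of j "{..<N}" "\<lambda>x. D x * D x"] that by auto
  next
    case False
    then show ?thesis using PiM_cross[OF P _ _ _ False iD iD, of "{..<N}"] that ID by auto
  qed
  have eq: "((\<Sum>j<N. Y (xs j)) / real N - m)\<^sup>2 = (\<Sum>j<N. \<Sum>k<N. D (xs j) * D (xs k)) / (real N)\<^sup>2" for xs
  proof -
    have "(\<Sum>j<N. Y (xs j)) / real N - m = (\<Sum>j<N. D (xs j)) / real N"
      using N by (simp add: D_def sum_subtractf field_simps)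
    then show ?thesis by (simp add: power2_eq_square sum_product power_divide)
  qed
  have "(\<integral>xs. ((\<Sum>j<N. Y (xs j)) / real N - m)\<^sup>2 \<partial>PiM {..<N} (\<lambda>_. P))
      = (\<Sum>j<N. \<Sum>k<N. (\<integral>xs. D (xs j) * D (xs k) \<partial>PiM {..<N} (\<lambda>_. P))) / (real N)\<^sup>2"
  proof -
    have "(\<integral>xs. (\<Sum>j<N. \<Sum>k<N. D (xs j) * D (xs k)) \<partial>PiM {..<N} (\<lambda>_. P))
      = (\<Sum>j<N. \<Sum>k<N. (\<integral>xs. D (xs j) * D (xs k) \<partial>PiM {..<N} (\<lambda>_. P)))"
    proof -
      have "(\<integral>xs. (\<Sum>j<N. \<Sum>k<N. D (xs j) * D (xs k)) \<partial>PiM {..<N} (\<lambda>_. P))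
        = (\<Sum>j<N. (\<integral>xs. (\<Sum>k<N. D (xs j) * D (xs k)) \<partial>PiM {..<N} (\<lambda>_. P)))"
        by (rule Bochner_Integration.integral_sum) (auto intro!: Bochner_Integration.integrable_sum ijk)
      also have "\<dots> = (\<Sum>j<N. \<Sum>k<N. (\<integral>xs. D (xs j) * D (xs k) \<partial>PiM {..<N} (\<lambda>_. P)))"
        by (intro sum.cong refl Bochner_Integration.integral_sum) (auto intro!: ijk)
      finally show ?thesis .
    qed
    then show ?thesis unfolding eq by simp
  qed
  also have "\<dots> = (\<Sum>j<N. (\<integral>x. D x * D x \<partial>P)) / (real N)\<^sup>2"
    by (simp add: Ejk)
  also have "\<dots> = (\<integral>x. D x * D x \<partial>P) / real N"
    using N by (simp add: power2_eq_square)
  also have "\<dots> \<le> M * m / real N"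
    using ID2 N by (simp add: divide_right_mono)
  finally show ?thesis unfolding m_def .
qed



lemma abs_le_eta: "0 < (e::real) \<Longrightarrow> \<bar>w\<bar> \<le> e + w\<^sup>2 / e"
proof -
  assume e: "0 < e"
  have "0 \<le> (\<bar>w\<bar> - e)\<^sup>2" by simp
  then have "2 * e * \<bar>w\<bar> \<le> w\<^sup>2 + e\<^sup>2" by (simp add: power2_eq_square algebra_simps)
  moreover have "0 \<le> e * \<bar>w\<bar>" using e by simp
  ultimately have "e * \<bar>w\<bar> \<le> e * e + w\<^sup>2" by (simp add: power2_eq_square)
  then have "\<bar>w\<bar> \<le> (e * e + w\<^sup>2) / e" using e by (simp add: pos_le_divide_eq mult.commute)
  also have "\<dots> = e + w\<^sup>2 / e" using e by (simp add: add_divide_distrib)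
  finally show ?thesis .
qed

context ssm begin

lemma prob_density:
  assumes q: "dens \<mu> q" shows "prob_space (density \<mu> (\<lambda>x. ennreal (q x)))"
proof (rule prob_spaceI)
  have qm: "q \<in> borel_measurable \<mu>" using q unfolding dens_def by auto
  have "emeasure (density \<mu> (\<lambda>x. ennreal (q x))) (space (density \<mu> (\<lambda>x. ennreal (q x))))
     = (\<integral>\<^sup>+x. ennreal (q x) * indicator (space \<mu>) x \<partial>\<mu>)"
    using qm sets.top[of \<mu>] by (subst emeasure_density) auto
  also have "\<dots> = 1" using q unfolding dens_def by simp
  finally show "emeasure (density \<mu> (\<lambda>x. ennreal (q x))) (space (density \<mu> (\<lambda>x. ennreal (q x)))) = 1" .
qed

lemma comp_meas:
  "j \<in> I \<Longrightarrow> (\<lambda>xs. xs j) \<in> measurable (PiM I (\<lambda>_. density \<mu> (\<lambda>x. ennreal (q x)))) \<mu>"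
proof -
  assume j: "j \<in> I"
  have e: "measurable (PiM I (\<lambda>_. density \<mu> (\<lambda>x. ennreal (q x)))) (density \<mu> (\<lambda>x. ennreal (q x)))
    = measurable (PiM I (\<lambda>_. density \<mu> (\<lambda>x. ennreal (q x)))) \<mu>"
    by (rule measurable_cong_sets) auto
  show ?thesis using measurable_component_singleton[OF j, of "\<lambda>_. density \<mu> (\<lambda>x. ennreal (q x))"] e by simp
qed

lemma E_avg_nn:
  assumes q: "dens \<mu> q" and N: "1 \<le> N" and f: "f \<in> borel_measurable \<mu>" and f0: "\<And>x. 0 \<le> f x"
  shows "(\<integral>\<^sup>+xs. ennreal ((\<Sum>j<N. f (xs j)) / real N) \<partial>PiM {..<N} (\<lambda>_. density \<mu> (\<lambda>x. ennreal (q x))))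
      = (\<integral>\<^sup>+x. ennreal (q x * f x) \<partial>\<mu>)"
proof -
  let ?P = "density \<mu> (\<lambda>x. ennreal (q x))"
  have P: "prob_space ?P" by (rule prob_density[OF q])
  have qm: "q \<in> borel_measurable \<mu>" and q0: "\<forall>x. 0 \<le> q x" using q unfolding dens_def by auto
  have e: "borel_measurable ?P = borel_measurable \<mu>" by (rule measurable_cong_sets) auto
  have fm: "(\<lambda>x. ennreal (f x)) \<in> borel_measurable ?P" unfolding e using f by simp
  have fj: "(\<lambda>xs. ennreal (f (xs j))) \<in> borel_measurable (PiM {..<N} (\<lambda>_. ?P))" if "j < N" for j
  proof -
    have "(\<lambda>xs. f (xs j)) \<in> borel_measurable (PiM {..<N} (\<lambda>_. ?P))"
      using measurable_compose[OF comp_meas[of j "{..<N}" q] f] that by simp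
    then show ?thesis by simp
  qed
  have "(\<integral>\<^sup>+xs. ennreal ((\<Sum>j<N. f (xs j)) / real N) \<partial>PiM {..<N} (\<lambda>_. ?P))
      = (\<integral>\<^sup>+xs. (\<Sum>j<N. ennreal (f (xs j))) * ennreal (1 / real N) \<partial>PiM {..<N} (\<lambda>_. ?P))"
    using f0 by (intro nn_integral_cong) (simp add: ennreal_mult[symmetric] sum_nonneg divide_inverse)
  also have "\<dots> = (\<integral>\<^sup>+xs. (\<Sum>j<N. ennreal (f (xs j))) \<partial>PiM {..<N} (\<lambda>_. ?P)) * ennreal (1 / real N)"
    by (rule nn_integral_multc) (auto intro!: borel_measurable_sum fj)
  also have "(\<integral>\<^sup>+xs. (\<Sum>j<N. ennreal (f (xs j))) \<partial>PiM {..<N} (\<lambda>_. ?P))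
      = (\<Sum>j<N. (\<integral>\<^sup>+xs. ennreal (f (xs j)) \<partial>PiM {..<N} (\<lambda>_. ?P)))"
    by (rule nn_integral_sum) (auto intro!: fj)
  also have "\<dots> = (\<Sum>j<N. (\<integral>\<^sup>+x. ennreal (f x) \<partial>?P))"
    by (intro sum.cong refl PiM_comp_nn[OF P] fm) auto
  also have "\<dots> * ennreal (1 / real N) = (\<integral>\<^sup>+x. ennreal (f x) \<partial>?P)"
  proof -
    have nc: "ennreal (real N) * ennreal (1 / real N) = 1" using N by (simp add: ennreal_mult[symmetric])
    have "(\<Sum>j<N. (\<integral>\<^sup>+x. ennreal (f x) \<partial>?P)) * ennreal (1 / real N)
       = (\<integral>\<^sup>+x. ennreal (f x) \<partial>?P) * (ennreal (real N) * ennreal (1 / real N))"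
      by (simp add: ennreal_of_nat_eq_real_of_nat ac_simps)
    then show ?thesis using nc by simp
  qed
  also have "\<dots> = (\<integral>\<^sup>+x. ennreal (q x * f x) \<partial>\<mu>)"
    using qm f q0 f0 by (subst nn_integral_density) (auto simp: ennreal_mult)
  finally show ?thesis .
qed

lemma comp_fun_meas:
  fixes g :: "'a \<Rightarrow> real"
  assumes "g \<in> borel_measurable \<mu>" "j \<in> I"
  shows "(\<lambda>xs. g (xs j)) \<in> borel_measurable (PiM I (\<lambda>_. density \<mu> (\<lambda>x. ennreal (q x))))"
  using measurable_compose[OF comp_meas[of j I q] assms(1)] assms(2) by simp

lemma E_abs1:
  assumes T: "1 \<le> T" and q: "dens \<mu> q" and N: "1 \<le> N" and M: "0 \<le> M" and eta: "0 < \<eta>"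
  shows "(\<integral>\<^sup>+xs. ennreal \<bar>avg N T xs z - pr T q z\<bar> \<partial>PiM {..<N} (\<lambda>_. density \<mu> (\<lambda>x. ennreal (q x))))
    \<le> ennreal \<eta> + ennreal (M / (real N * \<eta>)) * prn T q z
       + 2 * (\<integral>\<^sup>+x. ennreal (q x * (a T x z - min (a T x z) M)) \<partial>\<mu>)"
proof -
  let ?P = "density \<mu> (\<lambda>x. ennreal (q x))"
  let ?PQ = "PiM {..<N} (\<lambda>_. ?P)"
  have P: "prob_space ?P" by (rule prob_density[OF q])
  interpret P: prob_space ?P by (rule P)
  interpret PQ: prob_space ?PQ by (intro prob_space_PiM) (auto simp: P)
  have qm[measurable]: "q \<in> borel_measurable \<mu>" and q0: "\<And>x. 0 \<le> q x" using q unfolding dens_def by auto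
  have e: "borel_measurable ?P = borel_measurable \<mu>" by (rule measurable_cong_sets) auto
  have a0: "\<And>x. 0 \<le> a T x z" using a_nonneg T by auto
  have azm[measurable]: "(\<lambda>x. a T x z) \<in> borel_measurable \<mu>" by (rule a_comp[OF T]) auto
  define Y where "Y x = min (a T x z) M" for x
  have Ym[measurable]: "Y \<in> borel_measurable \<mu>" unfolding Y_def by measurable
  have Y0: "\<And>x. 0 \<le> Y x" and YM: "\<And>x. Y x \<le> M" and Ya: "\<And>x. Y x \<le> a T x z"
    unfolding Y_def using a0 M by auto
  have YmP: "Y \<in> borel_measurable ?P" unfolding e by (rule Ym)
  have iY: "integrable ?P Y"
    using YmP Y0 YM by (intro P.integrable_const_bound[where B=M]) (auto intro!: AE_I2)
  define m where "m = (\<integral>x. Y x \<partial>?P)"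
  define Rz where "Rz = (\<integral>\<^sup>+x. ennreal (q x * (a T x z - Y x)) \<partial>\<mu>)"
  define W where "W xs = (\<Sum>j<N. Y (xs j)) / real N - m" for xs
  define AR where "AR xs = (\<Sum>j<N. a T (xs j) z - Y (xs j)) / real N" for xs
  have m0: "0 \<le> m" unfolding m_def using Y0 by auto
  have mM: "m \<le> M" unfolding m_def using integral_mono[OF iY _ YM] P.prob_space[unfolded space_density space_mu] by auto
  have sY: "(\<lambda>xs. \<Sum>j<N. Y (xs j)) \<in> borel_measurable ?PQ"
    by (rule borel_measurable_sum) (rule comp_fun_meas[OF Ym], simp)
  have aYm: "(\<lambda>x. a T x z - Y x) \<in> borel_measurable \<mu>" by measurable
  have sAR: "(\<lambda>xs. \<Sum>j<N. a T (xs j) z - Y (xs j)) \<in> borel_measurable ?PQ"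
    by (rule borel_measurable_sum) (rule comp_fun_meas[OF aYm], simp)
  have Wm[measurable]: "W \<in> borel_measurable ?PQ"
    unfolding W_def using sY by measurable
  have ARm: "AR \<in> borel_measurable ?PQ"
    unfolding AR_def using sAR by measurable
  have AR0: "0 \<le> AR xs" for xs unfolding AR_def using Ya by (auto intro!: sum_nonneg divide_nonneg_nonneg simp: le_diff_eq)
  have Wb: "\<bar>W xs\<bar> \<le> M" for xs
  proof -
    have "0 \<le> (\<Sum>j<N. Y (xs j)) / real N" using Y0 by (auto intro!: sum_nonneg divide_nonneg_nonneg)
    moreover have "(\<Sum>j<N. Y (xs j)) / real N \<le> M"
    proof -
      have "(\<Sum>j<N. Y (xs j)) \<le> (\<Sum>j<N. M)" by (intro sum_mono YM)
      then show ?thesis using N by (simp add: divide_le_eq mult.commute)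
    qed
    ultimately show ?thesis unfolding W_def using m0 mM by auto
  qed
  have split: "avg N T xs z = (\<Sum>j<N. Y (xs j)) / real N + AR xs" for xs
    unfolding avg_def AR_def by (simp add: sum_subtractf add_divide_distrib[symmetric])
  have pt: "ennreal \<bar>avg N T xs z - pr T q z\<bar> \<le> ennreal (\<eta> + (W xs)\<^sup>2 / \<eta>) + ennreal (AR xs) + ennreal \<bar>m - pr T q z\<bar>" for xs
  proof -
    have "\<bar>avg N T xs z - pr T q z\<bar> \<le> \<bar>W xs\<bar> + AR xs + \<bar>m - pr T q z\<bar>"
      unfolding split W_def using AR0[of xs] by linarith
    also have "\<dots> \<le> (\<eta> + (W xs)\<^sup>2 / \<eta>) + AR xs + \<bar>m - pr T q z\<bar>"
      using abs_le_eta[OF eta, of "W xs"] by linarith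
    finally show ?thesis
      using AR0[of xs] eta by (simp add: ennreal_plus[symmetric] del: ennreal_plus)
  qed
  have iW2: "integrable ?PQ (\<lambda>xs. (W xs)\<^sup>2)"
    proof (intro PQ.integrable_const_bound[where B="M*M"] AE_I2)
      fix xs
      have "\<bar>W xs\<bar> * \<bar>W xs\<bar> \<le> M * M" using Wb[of xs] by (intro mult_mono) auto
      then show "norm ((W xs)\<^sup>2) \<le> M * M" by (simp add: power2_eq_square abs_mult)
  qed simp
  have iW: "integrable ?PQ (\<lambda>xs. \<eta> + (W xs)\<^sup>2 / \<eta>)" using iW2 by auto
  have "(\<integral>\<^sup>+xs. ennreal \<bar>avg N T xs z - pr T q z\<bar> \<partial>?PQ)
      \<le> (\<integral>\<^sup>+xs. ennreal (\<eta> + (W xs)\<^sup>2 / \<eta>) + ennreal (AR xs) + ennreal \<bar>m - pr T q z\<bar> \<partial>?PQ)"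
    by (intro nn_integral_mono pt)
  also have "\<dots> = (\<integral>\<^sup>+xs. ennreal (\<eta> + (W xs)\<^sup>2 / \<eta>) \<partial>?PQ) + (\<integral>\<^sup>+xs. ennreal (AR xs) \<partial>?PQ)
      + ennreal \<bar>m - pr T q z\<bar>"
    using Wm ARm by (simp add: nn_integral_add PQ.emeasure_space_1)
  also have "(\<integral>\<^sup>+xs. ennreal (\<eta> + (W xs)\<^sup>2 / \<eta>) \<partial>?PQ) = ennreal (\<eta> + (\<integral>xs. (W xs)\<^sup>2 \<partial>?PQ) / \<eta>)"
  proof -
    have "(\<integral>\<^sup>+xs. ennreal (\<eta> + (W xs)\<^sup>2 / \<eta>) \<partial>?PQ) = ennreal (\<integral>xs. \<eta> + (W xs)\<^sup>2 / \<eta> \<partial>?PQ)"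
      using iW eta by (intro nn_integral_eq_integral) auto
    also have "(\<integral>xs. \<eta> + (W xs)\<^sup>2 / \<eta> \<partial>?PQ) = \<eta> + (\<integral>xs. (W xs)\<^sup>2 \<partial>?PQ) / \<eta>"
    proof -
      have "(\<integral>xs. \<eta> + (W xs)\<^sup>2 / \<eta> \<partial>?PQ) = (\<integral>xs. \<eta> \<partial>?PQ) + (\<integral>xs. (W xs)\<^sup>2 / \<eta> \<partial>?PQ)"
        using iW2 by (intro Bochner_Integration.integral_add) auto
      also have "(\<integral>xs. \<eta> \<partial>?PQ) = \<eta>" by (simp add: PQ.prob_space)
      also have "(\<integral>xs. (W xs)\<^sup>2 / \<eta> \<partial>?PQ) = (\<integral>xs. (W xs)\<^sup>2 \<partial>?PQ) / \<eta>" by simp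
      finally show ?thesis .
    qed
    finally show ?thesis .
  qed
  also have "(\<integral>\<^sup>+xs. ennreal (AR xs) \<partial>?PQ) = Rz"
    unfolding AR_def Rz_def using Ya by (intro E_avg_nn[OF q N]) auto
  finally have A1: "(\<integral>\<^sup>+xs. ennreal \<bar>avg N T xs z - pr T q z\<bar> \<partial>?PQ)
      \<le> ennreal (\<eta> + (\<integral>xs. (W xs)\<^sup>2 \<partial>?PQ) / \<eta>) + Rz + ennreal \<bar>m - pr T q z\<bar>" .
  have vb: "(\<integral>xs. (W xs)\<^sup>2 \<partial>?PQ) \<le> M * m / real N"
    unfolding W_def m_def by (rule var_bound[OF P N YmP Y0 YM])
  have A2: "ennreal (\<eta> + (\<integral>xs. (W xs)\<^sup>2 \<partial>?PQ) / \<eta>) \<le> ennreal (\<eta> + M * m / real N / \<eta>)"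
    using vb eta by (intro ennreal_leI add_left_mono divide_right_mono) auto
  have A: "(\<integral>\<^sup>+xs. ennreal \<bar>avg N T xs z - pr T q z\<bar> \<partial>?PQ)
      \<le> ennreal (\<eta> + M * m / real N / \<eta>) + Rz + ennreal \<bar>m - pr T q z\<bar>"
    using A1 A2 by (meson add_right_mono order_trans)
  have em: "ennreal m = (\<integral>\<^sup>+x. ennreal (q x * Y x) \<partial>\<mu>)"
  proof -
    have "ennreal m = (\<integral>\<^sup>+x. ennreal (Y x) \<partial>?P)"
      unfolding m_def using iY Y0 by (intro nn_integral_eq_integral[symmetric]) auto
    also have "\<dots> = (\<integral>\<^sup>+x. ennreal (q x * Y x) \<partial>\<mu>)"
      using q0 by (subst nn_integral_density) (auto simp: ennreal_mult')
    finally show ?thesis .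
  qed
  have prn_split: "prn T q z = ennreal m + Rz"
  proof -
    have "prn T q z = (\<integral>\<^sup>+x. ennreal (q x * Y x) + ennreal (q x * (a T x z - Y x)) \<partial>\<mu>)"
      unfolding prn_def
    proof (intro nn_integral_cong)
      fix x
      have h1: "0 \<le> q x * Y x" using q0 Y0 by simp
      have h2: "0 \<le> q x * (a T x z - Y x)" using q0 Ya by simp
      have "q x * a T x z = q x * Y x + q x * (a T x z - Y x)" by (simp add: algebra_simps)
      then show "ennreal (q x * a T x z) = ennreal (q x * Y x) + ennreal (q x * (a T x z - Y x))"
        using ennreal_plus[OF h1 h2] by simp
    qed
    also have "\<dots> = ennreal m + Rz" unfolding em Rz_def by (intro nn_integral_add) auto
    finally show ?thesis .
  qed
  have B: "ennreal \<bar>m - pr T q z\<bar> \<le> Rz"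
  proof (cases "Rz = \<infinity>")
    case True then show ?thesis by simp
  next
    case False
    then obtain r where r: "Rz = ennreal r" "0 \<le> r" by (cases Rz) auto
    have "pr T q z = enn2real (prn T q z)" using pr_eq[OF T qm] q0 by auto
    also have "\<dots> = m + r" unfolding prn_split r using m0 r by (simp add: ennreal_plus[symmetric] del: ennreal_plus)
    finally show ?thesis using r by simp
  qed
  have C: "ennreal (\<eta> + M * m / real N / \<eta>) \<le> ennreal \<eta> + ennreal (M / (real N * \<eta>)) * prn T q z"
  proof -
    have "ennreal (\<eta> + M * m / real N / \<eta>) = ennreal \<eta> + ennreal (M / (real N * \<eta>)) * ennreal m"
      using eta M m0 N by (simp add: ennreal_plus[symmetric] ennreal_mult[symmetric] del: ennreal_plus)
    also have "\<dots> \<le> ennreal \<eta> + ennreal (M / (real N * \<eta>)) * prn T q z"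
      unfolding prn_split by (intro add_mono mult_left_mono) auto
    finally show ?thesis .
  qed
  have "(\<integral>\<^sup>+xs. ennreal \<bar>avg N T xs z - pr T q z\<bar> \<partial>?PQ)
     \<le> ennreal \<eta> + ennreal (M / (real N * \<eta>)) * prn T q z + Rz + Rz"
  proof -
    have "ennreal (\<eta> + M * m / real N / \<eta>) + Rz + ennreal \<bar>m - pr T q z\<bar>
      \<le> ennreal \<eta> + ennreal (M / (real N * \<eta>)) * prn T q z + Rz + Rz"
      by (intro add_mono C order_refl B)
    then show ?thesis using A by (rule order_trans[rotated])
  qed
  then show ?thesis unfolding Rz_def Y_def by (simp add: mult_2 add.assoc)
qed

end


context ssm begin

lemma E_abs2:
  assumes T: "1 \<le> T" and q: "dens \<mu> q" and N: "1 \<le> N"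
  shows "(\<integral>\<^sup>+xs. ennreal \<bar>avg N T xs z - pr T q z\<bar> \<partial>PiM {..<N} (\<lambda>_. density \<mu> (\<lambda>x. ennreal (q x))))
    \<le> 2 * prn T q z"
proof -
  let ?P = "density \<mu> (\<lambda>x. ennreal (q x))"
  let ?PQ = "PiM {..<N} (\<lambda>_. ?P)"
  have P: "prob_space ?P" by (rule prob_density[OF q])
  interpret PQ: prob_space ?PQ by (intro prob_space_PiM) (auto simp: P)
  have qm[measurable]: "q \<in> borel_measurable \<mu>" and q0: "\<And>x. 0 \<le> q x" using q unfolding dens_def by auto
  have a0: "\<And>x. 0 \<le> a T x z" using a_nonneg T by auto
  have azm[measurable]: "(\<lambda>x. a T x z) \<in> borel_measurable \<mu>" by (rule a_comp[OF T]) auto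
  have avg0: "0 \<le> avg N T xs z" for xs using avg_props(2)[OF T N] by auto
  have pr0: "0 \<le> pr T q z" using dens_pr(2)[OF T q] by auto
  have sA: "(\<lambda>xs. \<Sum>j<N. a T (xs j) z) \<in> borel_measurable ?PQ"
    by (rule borel_measurable_sum) (rule comp_fun_meas[OF azm], simp)
  have avgm: "(\<lambda>xs. avg N T xs z) \<in> borel_measurable ?PQ"
    unfolding avg_def using sA by measurable
  have "(\<integral>\<^sup>+xs. ennreal \<bar>avg N T xs z - pr T q z\<bar> \<partial>?PQ)
      \<le> (\<integral>\<^sup>+xs. ennreal (avg N T xs z) + ennreal (pr T q z) \<partial>?PQ)"
  proof (intro nn_integral_mono)
    fix xs
    have "\<bar>avg N T xs z - pr T q z\<bar> \<le> avg N T xs z + pr T q z" using avg0[of xs] pr0 by linarith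
    then show "ennreal \<bar>avg N T xs z - pr T q z\<bar> \<le> ennreal (avg N T xs z) + ennreal (pr T q z)"
      using avg0[of xs] pr0 by (simp add: ennreal_plus[symmetric] del: ennreal_plus)
  qed
  also have "\<dots> = (\<integral>\<^sup>+xs. ennreal (avg N T xs z) \<partial>?PQ) + ennreal (pr T q z)"
    using avgm by (simp add: nn_integral_add PQ.emeasure_space_1)
  also have "(\<integral>\<^sup>+xs. ennreal (avg N T xs z) \<partial>?PQ) = prn T q z"
    unfolding avg_def prn_def using a0 by (intro E_avg_nn[OF q N]) auto
  also have "ennreal (pr T q z) \<le> prn T q z"
  proof (cases "prn T q z = \<infinity>")
    case True then show ?thesis by simp
  next
    case False
    then show ?thesis using pr_eq[OF T qm] q0 by (simp add: ennreal_enn2real_if)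
  qed
  finally show ?thesis by (simp add: mult_2 add_left_mono)
qed

definition Rz :: "nat \<Rightarrow> ('a \<Rightarrow> real) \<Rightarrow> real \<Rightarrow> 'a \<Rightarrow> ennreal" where
  "Rz T q M z = (\<integral>\<^sup>+x. ennreal (q x * (a T x z - min (a T x z) M)) \<partial>\<mu>)"

lemma Rz_meas:
  assumes T: "1 \<le> T" and q: "q \<in> borel_measurable \<mu>"
  shows "Rz T q M \<in> borel_measurable \<mu>"
proof -
  have [measurable]: "(\<lambda>(z, x). a T x z) \<in> borel_measurable (\<mu> \<Otimes>\<^sub>M \<mu>)" by (rule a_swap_meas[OF T])
  have [measurable]: "q \<in> borel_measurable \<mu>" by fact
  have "(\<lambda>(z, x). ennreal (q x * (a T x z - min (a T x z) M))) \<in> borel_measurable (\<mu> \<Otimes>\<^sub>M \<mu>)"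
    by measurable
  then show ?thesis unfolding Rz_def[abs_def] by (rule borel_measurable_nn_integral)
qed

lemma avg_pair_meas:
  assumes T: "1 \<le> T"
  shows "(\<lambda>p. avg N T (fst p) (snd p)) \<in> borel_measurable (PiM {..<N} (\<lambda>_. density \<mu> (\<lambda>x. ennreal (q x))) \<Otimes>\<^sub>M \<mu>)"
proof -
  let ?PQ = "PiM {..<N} (\<lambda>_. density \<mu> (\<lambda>x. ennreal (q x)))"
  have "(\<lambda>p. a T (fst p j) (snd p)) \<in> borel_measurable (?PQ \<Otimes>\<^sub>M \<mu>)" if "j < N" for j
  proof (rule a_comp[OF T])
    show "(\<lambda>p. fst p j) \<in> measurable (?PQ \<Otimes>\<^sub>M \<mu>) \<mu>"
      using measurable_compose[OF measurable_fst comp_meas[of j "{..<N}" q]] that by simp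
  qed simp
  then have "(\<lambda>p. \<Sum>j<N. a T (fst p j) (snd p)) \<in> borel_measurable (?PQ \<Otimes>\<^sub>M \<mu>)"
    by (intro borel_measurable_sum) auto
  then show ?thesis unfolding avg_def by measurable
qed

lemma LLN_total:
  assumes T: "1 \<le> T" and q: "dens \<mu> q" and N: "1 \<le> N" and M: "0 \<le> M" and eta: "0 < \<eta>"
    and S: "S \<in> sets \<mu>"
  shows "(\<integral>\<^sup>+xs. L1_dist \<mu> (avg N T xs) (pr T q) \<partial>PiM {..<N} (\<lambda>_. density \<mu> (\<lambda>x. ennreal (q x))))
    \<le> ennreal \<eta> * emeasure \<mu> S + ennreal (M / (real N * \<eta>))
       + 2 * (\<integral>\<^sup>+z. Rz T q M z \<partial>\<mu>) + 2 * (\<integral>\<^sup>+z. prn T q z * indicator (- S) z \<partial>\<mu>)"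
proof -
  let ?P = "density \<mu> (\<lambda>x. ennreal (q x))"
  let ?PQ = "PiM {..<N} (\<lambda>_. ?P)"
  have P: "prob_space ?P" by (rule prob_density[OF q])
  interpret PQ: prob_space ?PQ by (intro prob_space_PiM) (auto simp: P)
  interpret pp2: pair_sigma_finite ?PQ \<mu>
    by (simp add: pair_sigma_finite_def PQ.sigma_finite_measure_axioms sigma_finite_measure_axioms)
  have qm[measurable]: "q \<in> borel_measurable \<mu>" using q unfolding dens_def by auto
  have prm[measurable]: "pr T q \<in> borel_measurable \<mu>" using dens_pr(1)[OF T q] .
  have prnm[measurable]: "prn T q \<in> borel_measurable \<mu>" using dens_prn(1)[OF T q] .
  have Rzm[measurable]: "Rz T q M \<in> borel_measurable \<mu>" by (rule Rz_meas[OF T qm])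
  have Sm[measurable]: "S \<in> sets \<mu>" by fact
  have avm[measurable]: "(\<lambda>p. avg N T (fst p) (snd p)) \<in> borel_measurable (?PQ \<Otimes>\<^sub>M \<mu>)"
    by (rule avg_pair_meas[OF T])
  have Fm: "(\<lambda>(xs, z). ennreal \<bar>avg N T xs z - pr T q z\<bar>) \<in> borel_measurable (?PQ \<Otimes>\<^sub>M \<mu>)"
  proof -
    have "(\<lambda>p. pr T q (snd p)) \<in> borel_measurable (?PQ \<Otimes>\<^sub>M \<mu>)"
      by (rule measurable_compose[OF measurable_snd prm])
    then have "(\<lambda>p. ennreal \<bar>avg N T (fst p) (snd p) - pr T q (snd p)\<bar>) \<in> borel_measurable (?PQ \<Otimes>\<^sub>M \<mu>)"
      using avm by measurable
    then show ?thesis by (simp add: case_prod_beta')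
  qed
  define c where "c = ennreal (M / (real N * \<eta>))"
  have "(\<integral>\<^sup>+xs. L1_dist \<mu> (avg N T xs) (pr T q) \<partial>?PQ)
      = (\<integral>\<^sup>+z. (\<integral>\<^sup>+xs. ennreal \<bar>avg N T xs z - pr T q z\<bar> \<partial>?PQ) \<partial>\<mu>)"
    unfolding L1_dist_def using pp2.Fubini'[OF Fm] by simp
  also have "\<dots> \<le> (\<integral>\<^sup>+z. ennreal \<eta> * indicator S z + c * prn T q z + 2 * Rz T q M z
                      + 2 * (prn T q z * indicator (- S) z) \<partial>\<mu>)"
  proof (intro nn_integral_mono)
    fix z
    show "(\<integral>\<^sup>+xs. ennreal \<bar>avg N T xs z - pr T q z\<bar> \<partial>?PQ)
      \<le> ennreal \<eta> * indicator S z + c * prn T q z + 2 * Rz T q M z + 2 * (prn T q z * indicator (- S) z)"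
    proof (cases "z \<in> S")
      case True
      have "(\<integral>\<^sup>+xs. ennreal \<bar>avg N T xs z - pr T q z\<bar> \<partial>?PQ) \<le> ennreal \<eta> + c * prn T q z + 2 * Rz T q M z"
        unfolding c_def Rz_def by (rule E_abs1[OF T q N M eta])
      also have "\<dots> \<le> ennreal \<eta> * indicator S z + c * prn T q z + 2 * Rz T q M z + 2 * (prn T q z * indicator (- S) z)"
        using True by simp
      finally show ?thesis .
    next
      case False
      have "(\<integral>\<^sup>+xs. ennreal \<bar>avg N T xs z - pr T q z\<bar> \<partial>?PQ) \<le> 2 * prn T q z"
        by (rule E_abs2[OF T q N])
      also have "\<dots> \<le> ennreal \<eta> * indicator S z + c * prn T q z + 2 * Rz T q M z + 2 * (prn T q z * indicator (- S) z)"
        using False by (simp add: add_increasing)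
      finally show ?thesis .
    qed
  qed
  also have "\<dots> = ennreal \<eta> * emeasure \<mu> S + c * (\<integral>\<^sup>+z. prn T q z \<partial>\<mu>)
       + 2 * (\<integral>\<^sup>+z. Rz T q M z \<partial>\<mu>) + 2 * (\<integral>\<^sup>+z. prn T q z * indicator (- S) z \<partial>\<mu>)"
    by (simp add: nn_integral_add nn_integral_cmult nn_integral_cmult_indicator)
  also have "(\<integral>\<^sup>+z. prn T q z \<partial>\<mu>) = 1" by (rule dens_prn(2)[OF T q])
  finally show ?thesis unfolding c_def by simp
qed

end


context ssm begin

lemma unif:
  assumes g: "g \<in> borel_measurable (\<mu> \<Otimes>\<^sub>M \<mu>)" and g1: "\<And>x. (\<integral>\<^sup>+z. g (x, z) \<partial>\<mu>) \<le> 1"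
    and q: "q \<in> borel_measurable \<mu>" and h: "h \<in> borel_measurable \<mu>"
  shows "(\<integral>\<^sup>+p. ennreal (q (fst p)) * g p \<partial>(\<mu> \<Otimes>\<^sub>M \<mu>))
      \<le> (\<integral>\<^sup>+p. ennreal (h (fst p)) * g p \<partial>(\<mu> \<Otimes>\<^sub>M \<mu>)) + L1_dist \<mu> q h"
proof -
  have [measurable]: "q \<in> borel_measurable \<mu>" "h \<in> borel_measurable \<mu>" "g \<in> borel_measurable (\<mu> \<Otimes>\<^sub>M \<mu>)"
    using q h g by auto
  have "(\<integral>\<^sup>+p. ennreal (q (fst p)) * g p \<partial>(\<mu> \<Otimes>\<^sub>M \<mu>))
      \<le> (\<integral>\<^sup>+p. ennreal (h (fst p)) * g p + ennreal \<bar>q (fst p) - h (fst p)\<bar> * g p \<partial>(\<mu> \<Otimes>\<^sub>M \<mu>))"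
  proof (intro nn_integral_mono)
    fix p :: "'a \<times> 'a"
    have "ennreal (q (fst p)) \<le> ennreal (h (fst p)) + ennreal \<bar>q (fst p) - h (fst p)\<bar>"
    proof (cases "0 \<le> h (fst p)")
      case True
      then show ?thesis by (simp add: ennreal_plus[symmetric] del: ennreal_plus)
    next
      case False
      then have "ennreal (q (fst p)) \<le> ennreal \<bar>q (fst p) - h (fst p)\<bar>" by (intro ennreal_leI) linarith
      then show ?thesis using False by (simp add: ennreal_neg)
    qed
    then have "ennreal (q (fst p)) * g p \<le> (ennreal (h (fst p)) + ennreal \<bar>q (fst p) - h (fst p)\<bar>) * g p"
      by (rule mult_right_mono) simp
    then show "ennreal (q (fst p)) * g p \<le> ennreal (h (fst p)) * g p + ennreal \<bar>q (fst p) - h (fst p)\<bar> * g p"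
      by (simp add: distrib_right)
  qed
  also have "\<dots> = (\<integral>\<^sup>+p. ennreal (h (fst p)) * g p \<partial>(\<mu> \<Otimes>\<^sub>M \<mu>)) + (\<integral>\<^sup>+p. ennreal \<bar>q (fst p) - h (fst p)\<bar> * g p \<partial>(\<mu> \<Otimes>\<^sub>M \<mu>))"
    by (intro nn_integral_add) auto
  also have "(\<integral>\<^sup>+p. ennreal \<bar>q (fst p) - h (fst p)\<bar> * g p \<partial>(\<mu> \<Otimes>\<^sub>M \<mu>)) = (\<integral>\<^sup>+x. \<integral>\<^sup>+z. ennreal \<bar>q x - h x\<bar> * g (x, z) \<partial>\<mu> \<partial>\<mu>)"
    by (subst nn_integral_fst[symmetric]) auto
  also have "\<dots> = (\<integral>\<^sup>+x. ennreal \<bar>q x - h x\<bar> * (\<integral>\<^sup>+z. g (x, z) \<partial>\<mu>) \<partial>\<mu>)"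
    by (intro nn_integral_cong nn_integral_cmult) auto
  also have "\<dots> \<le> (\<integral>\<^sup>+x. ennreal \<bar>q x - h x\<bar> \<partial>\<mu>)"
    by (intro nn_integral_mono) (metis g1 mult.right_neutral mult_left_mono zero_le)
  finally show ?thesis unfolding L1_dist_def by (simp add: add_left_mono)
qed

lemma a_sec1: "1 \<le> T \<Longrightarrow> (\<lambda>z. a T x z) \<in> borel_measurable \<mu>"
  by (rule a_comp) auto

lemma a_sec2: "1 \<le> T \<Longrightarrow> (\<lambda>x. a T x z) \<in> borel_measurable \<mu>"
  by (rule a_comp) auto

lemma int_ha:
  assumes T: "1 \<le> T" and h: "dens \<mu> h"
  shows "(\<integral>\<^sup>+p. ennreal (h (fst p)) * ennreal (a T (fst p) (snd p)) \<partial>(\<mu> \<Otimes>\<^sub>M \<mu>)) = 1"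
proof -
  have hm: "h \<in> borel_measurable \<mu>" using h unfolding dens_def by auto
  have am: "(\<lambda>p. a T (fst p) (snd p)) \<in> borel_measurable (\<mu> \<Otimes>\<^sub>M \<mu>)" by (rule a_comp[OF T]) auto
  have hf: "(\<lambda>p. h (fst p)) \<in> borel_measurable (\<mu> \<Otimes>\<^sub>M \<mu>)" by (rule measurable_compose[OF measurable_fst hm])
  have fm: "(\<lambda>p. ennreal (h (fst p)) * ennreal (a T (fst p) (snd p))) \<in> borel_measurable (\<mu> \<Otimes>\<^sub>M \<mu>)"
    using hf am by measurable
  have "(\<integral>\<^sup>+p. ennreal (h (fst p)) * ennreal (a T (fst p) (snd p)) \<partial>(\<mu> \<Otimes>\<^sub>M \<mu>))
      = (\<integral>\<^sup>+x. \<integral>\<^sup>+z. ennreal (h x) * ennreal (a T x z) \<partial>\<mu> \<partial>\<mu>)"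
    using nn_integral_fst[OF fm] by simp
  also have "\<dots> = (\<integral>\<^sup>+x. ennreal (h x) * (\<integral>\<^sup>+z. ennreal (a T x z) \<partial>\<mu>) \<partial>\<mu>)"
  proof (intro nn_integral_cong nn_integral_cmult)
    fix x show "(\<lambda>z. ennreal (a T x z)) \<in> borel_measurable \<mu>"
    proof -
      have am1: "(\<lambda>z. a T x z) \<in> borel_measurable \<mu>" by (rule a_comp[OF T]) auto
      then show ?thesis by measurable
    qed
  qed
  also have "\<dots> = (\<integral>\<^sup>+x. ennreal (h x) \<partial>\<mu>)"
    using a_int T by (intro nn_integral_cong) simp
  finally show ?thesis using h unfolding dens_def by simp
qed

end


context ssm begin

lemma pair_meas:
  assumes T: "1 \<le> T"
  shows "(\<lambda>p. a T (fst p) (snd p)) \<in> borel_measurable (\<mu> \<Otimes>\<^sub>M \<mu>)"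
  by (rule a_comp[OF T]) auto

lemma choose_M:
  assumes T: "1 \<le> T" and h: "dens \<mu> h" and e: "0 < e"
  shows "\<exists>M\<ge>0. (\<integral>\<^sup>+p. ennreal (h (fst p)) * ennreal (a T (fst p) (snd p) - min (a T (fst p) (snd p)) M) \<partial>(\<mu> \<Otimes>\<^sub>M \<mu>)) < ennreal e"
proof -
  have hm: "h \<in> borel_measurable \<mu>" and h0: "\<And>x. 0 \<le> h x" using h unfolding dens_def by auto
  have hf: "(\<lambda>p. h (fst p)) \<in> borel_measurable (\<mu> \<Otimes>\<^sub>M \<mu>)" by (rule measurable_compose[OF measurable_fst hm])
  have am: "(\<lambda>p. a T (fst p) (snd p)) \<in> borel_measurable (\<mu> \<Otimes>\<^sub>M \<mu>)" by (rule pair_meas[OF T])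
  have a0: "\<And>x z. 0 \<le> a T x z" using a_nonneg T by auto
  define f where "f n p = ennreal (h (fst p)) * ennreal (a T (fst p) (snd p) - min (a T (fst p) (snd p)) (real n))" for n p
  have fm: "f n \<in> borel_measurable (\<mu> \<Otimes>\<^sub>M \<mu>)" for n
    unfolding f_def using hf am by measurable
  have dec: "decseq f"
    unfolding f_def by (intro decseq_SucI le_funI mult_left_mono ennreal_leI) auto
  have f0: "f 0 = (\<lambda>p. ennreal (h (fst p)) * ennreal (a T (fst p) (snd p)))"
    using a0 by (auto simp: f_def fun_eq_iff)
  have fin: "(\<integral>\<^sup>+p. f 0 p \<partial>(\<mu> \<Otimes>\<^sub>M \<mu>)) < \<infinity>" unfolding f0 using int_ha[OF T h] by simp
  have "(\<integral>\<^sup>+p. (INF n. f n p) \<partial>(\<mu> \<Otimes>\<^sub>M \<mu>)) = (INF n. integral\<^sup>N (\<mu> \<Otimes>\<^sub>M \<mu>) (f n))"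
    using dec fm fin by (intro nn_integral_monotone_convergence_INF_decseq) auto
  moreover have "(INF n. f n p) = 0" for p
  proof -
    define n0 where "n0 = nat \<lceil>a T (fst p) (snd p)\<rceil>"
    have "a T (fst p) (snd p) \<le> real n0" unfolding n0_def by linarith
    then have "f n0 p = 0" unfolding f_def by simp
    then have "(INF n. f n p) \<le> 0" by (metis INF_lower UNIV_I)
    then show ?thesis by simp
  qed
  ultimately have "(INF n. integral\<^sup>N (\<mu> \<Otimes>\<^sub>M \<mu>) (f n)) < ennreal e" using e by simp
  then obtain n where "integral\<^sup>N (\<mu> \<Otimes>\<^sub>M \<mu>) (f n) < ennreal e" by (auto simp: INF_less_iff)
  then show ?thesis unfolding f_def by (intro exI[of _ "real n"]) auto
qed

lemma choose_S:
  assumes T: "1 \<le> T" and h: "dens \<mu> h" and e: "0 < e"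
  shows "\<exists>S\<in>sets \<mu>. emeasure \<mu> S < \<infinity> \<and>
    (\<integral>\<^sup>+p. ennreal (h (fst p)) * (ennreal (a T (fst p) (snd p)) * indicator (- S) (snd p)) \<partial>(\<mu> \<Otimes>\<^sub>M \<mu>)) < ennreal e"
proof -
  obtain A :: "nat \<Rightarrow> 'a set" where A: "range A \<subseteq> sets \<mu>" "(\<Union>i. A i) = space \<mu>"
    "\<And>i. emeasure \<mu> (A i) \<noteq> \<infinity>" "incseq A"
    by (rule sigma_finite_incseq) blast
  have hm: "h \<in> borel_measurable \<mu>" and h0: "\<And>x. 0 \<le> h x" using h unfolding dens_def by auto
  have hf: "(\<lambda>p. h (fst p)) \<in> borel_measurable (\<mu> \<Otimes>\<^sub>M \<mu>)" by (rule measurable_compose[OF measurable_fst hm])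
  have am: "(\<lambda>p. a T (fst p) (snd p)) \<in> borel_measurable (\<mu> \<Otimes>\<^sub>M \<mu>)" by (rule pair_meas[OF T])
  have a0: "\<And>x z. 0 \<le> a T x z" using a_nonneg T by auto
  define f where "f n p = ennreal (h (fst p)) * (ennreal (a T (fst p) (snd p)) * indicator (- A n) (snd p))" for n p
  have Am: "A n \<in> sets \<mu>" for n using A(1) by auto
  have fm: "f n \<in> borel_measurable (\<mu> \<Otimes>\<^sub>M \<mu>)" for n
  proof -
    have "(\<lambda>p. indicator (- A n) (snd p) :: ennreal) \<in> borel_measurable (\<mu> \<Otimes>\<^sub>M \<mu>)"
    proof -
      have "- A n \<in> sets \<mu>" using Am[of n] sets.compl_sets[of "A n" \<mu>] by (simp add: Compl_eq_Diff_UNIV)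
      then show ?thesis by measurable
    qed
    then show ?thesis unfolding f_def using hf am by measurable
  qed
  have dec: "decseq f"
    unfolding f_def
  proof (intro decseq_SucI le_funI)
    fix m :: nat and p :: "'a \<times> 'a"
    define n where "n = Suc m"
    have "A m \<subseteq> A n" using A(4) unfolding n_def by (simp add: incseq_Suc_iff)
    then have "indicator (- A n) (snd p) \<le> (indicator (- A m) (snd p) :: ennreal)"
      by (auto simp: indicator_def)
    then show "ennreal (h (fst p)) * (ennreal (a T (fst p) (snd p)) * indicator (- A (Suc m)) (snd p))
      \<le> ennreal (h (fst p)) * (ennreal (a T (fst p) (snd p)) * indicator (- A m) (snd p))"
      unfolding n_def by (intro mult_left_mono) auto
  qed
  have fin: "(\<integral>\<^sup>+p. f 0 p \<partial>(\<mu> \<Otimes>\<^sub>M \<mu>)) < \<infinity>"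
  proof -
    have "(\<integral>\<^sup>+p. f 0 p \<partial>(\<mu> \<Otimes>\<^sub>M \<mu>)) \<le> (\<integral>\<^sup>+p. ennreal (h (fst p)) * ennreal (a T (fst p) (snd p)) \<partial>(\<mu> \<Otimes>\<^sub>M \<mu>))"
      unfolding f_def by (intro nn_integral_mono mult_left_mono) (auto simp: indicator_def)
    then have "(\<integral>\<^sup>+p. f 0 p \<partial>(\<mu> \<Otimes>\<^sub>M \<mu>)) \<le> 1" using int_ha[OF T h] by simp
    then show ?thesis by (rule le_less_trans) simp
  qed
  have "(\<integral>\<^sup>+p. (INF n. f n p) \<partial>(\<mu> \<Otimes>\<^sub>M \<mu>)) = (INF n. integral\<^sup>N (\<mu> \<Otimes>\<^sub>M \<mu>) (f n))"
    using dec fm fin by (intro nn_integral_monotone_convergence_INF_decseq) auto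
  moreover have "(INF n. f n p) = 0" for p
  proof -
    obtain n0 where "snd p \<in> A n0" using A(2) by auto
    then have "f n0 p = 0" unfolding f_def by simp
    then have "(INF n. f n p) \<le> 0" by (metis INF_lower UNIV_I)
    then show ?thesis by simp
  qed
  ultimately have "(INF n. integral\<^sup>N (\<mu> \<Otimes>\<^sub>M \<mu>) (f n)) < ennreal e" using e by simp
  then obtain n where "integral\<^sup>N (\<mu> \<Otimes>\<^sub>M \<mu>) (f n) < ennreal e" by (auto simp: INF_less_iff)
  then show ?thesis unfolding f_def using Am[of n] A(3)[of n] by (intro bexI[of _ "A n"]) (auto simp: less_top)
qed

lemma R1_eq:
  assumes T: "1 \<le> T" and qm: "q \<in> borel_measurable \<mu>" and q0: "\<And>x. 0 \<le> q x"
  shows "(\<integral>\<^sup>+z. Rz T q M z \<partial>\<mu>)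
    = (\<integral>\<^sup>+p. ennreal (q (fst p)) * ennreal (a T (fst p) (snd p) - min (a T (fst p) (snd p)) M) \<partial>(\<mu> \<Otimes>\<^sub>M \<mu>))"
proof -
  interpret pp: pair_sigma_finite \<mu> \<mu> by (rule pp)
  have qf: "(\<lambda>p. q (fst p)) \<in> borel_measurable (\<mu> \<Otimes>\<^sub>M \<mu>)" by (rule measurable_compose[OF measurable_fst qm])
  have am: "(\<lambda>p. a T (fst p) (snd p)) \<in> borel_measurable (\<mu> \<Otimes>\<^sub>M \<mu>)" by (rule pair_meas[OF T])
  have fm: "(\<lambda>p. ennreal (q (fst p)) * ennreal (a T (fst p) (snd p) - min (a T (fst p) (snd p)) M)) \<in> borel_measurable (\<mu> \<Otimes>\<^sub>M \<mu>)"
    using qf am by measurable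
  have "(\<integral>\<^sup>+z. Rz T q M z \<partial>\<mu>) = (\<integral>\<^sup>+z. \<integral>\<^sup>+x. ennreal (q x) * ennreal (a T x z - min (a T x z) M) \<partial>\<mu> \<partial>\<mu>)"
    unfolding Rz_def using q0 by (simp add: ennreal_mult')
  also have "\<dots> = (\<integral>\<^sup>+p. ennreal (q (fst p)) * ennreal (a T (fst p) (snd p) - min (a T (fst p) (snd p)) M) \<partial>(\<mu> \<Otimes>\<^sub>M \<mu>))"
    using pp.nn_integral_snd[OF fm] by simp
  finally show ?thesis .
qed

lemma R2_eq:
  assumes T: "1 \<le> T" and qm: "q \<in> borel_measurable \<mu>" and q0: "\<And>x. 0 \<le> q x" and S: "S \<in> sets \<mu>"
  shows "(\<integral>\<^sup>+z. prn T q z * indicator (- S) z \<partial>\<mu>)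
    = (\<integral>\<^sup>+p. ennreal (q (fst p)) * (ennreal (a T (fst p) (snd p)) * indicator (- S) (snd p)) \<partial>(\<mu> \<Otimes>\<^sub>M \<mu>))"
proof -
  interpret pp: pair_sigma_finite \<mu> \<mu> by (rule pp)
  have qf: "(\<lambda>p. q (fst p)) \<in> borel_measurable (\<mu> \<Otimes>\<^sub>M \<mu>)" by (rule measurable_compose[OF measurable_fst qm])
  have am: "(\<lambda>p. a T (fst p) (snd p)) \<in> borel_measurable (\<mu> \<Otimes>\<^sub>M \<mu>)" by (rule pair_meas[OF T])
  have cS: "- S \<in> sets \<mu>" using S sets.compl_sets[of S \<mu>] by (simp add: Compl_eq_Diff_UNIV)
  have iS: "(\<lambda>p. indicator (- S) (snd p) :: ennreal) \<in> borel_measurable (\<mu> \<Otimes>\<^sub>M \<mu>)"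
    using cS by measurable
  have fm: "(\<lambda>p. ennreal (q (fst p)) * (ennreal (a T (fst p) (snd p)) * indicator (- S) (snd p))) \<in> borel_measurable (\<mu> \<Otimes>\<^sub>M \<mu>)"
    using qf am iS by measurable
  have "(\<integral>\<^sup>+z. prn T q z * indicator (- S) z \<partial>\<mu>) = (\<integral>\<^sup>+z. \<integral>\<^sup>+x. ennreal (q x) * (ennreal (a T x z) * indicator (- S) z) \<partial>\<mu> \<partial>\<mu>)"
  proof (intro nn_integral_cong)
    fix z
    have m1: "(\<lambda>x. ennreal (q x * a T x z)) \<in> borel_measurable \<mu>"
      using qm a_sec2[OF T, of z] by measurable
    have "prn T q z * indicator (- S) z = (\<integral>\<^sup>+x. ennreal (q x * a T x z) * indicator (- S) z \<partial>\<mu>)"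
      unfolding prn_def by (rule nn_integral_multc[OF m1, symmetric])
    also have "\<dots> = (\<integral>\<^sup>+x. ennreal (q x) * (ennreal (a T x z) * indicator (- S) z) \<partial>\<mu>)"
      using q0 by (simp add: ennreal_mult' mult.assoc)
    finally show "prn T q z * indicator (- S) z = (\<integral>\<^sup>+x. ennreal (q x) * (ennreal (a T x z) * indicator (- S) z) \<partial>\<mu>)" .
  qed
  also have "\<dots> = (\<integral>\<^sup>+p. ennreal (q (fst p)) * (ennreal (a T (fst p) (snd p)) * indicator (- S) (snd p)) \<partial>(\<mu> \<Otimes>\<^sub>M \<mu>))"
    using pp.nn_integral_snd[OF fm] by simp
  finally show ?thesis .
qed

end


context ssm begin

lemma u_meas:
  assumes T: "1 \<le> T" and h: "dens \<mu> h"
  shows "(\<lambda>xs. L1_dist \<mu> (avg N T xs) (pr T h)) \<in> borel_measurable (PiM {..<N} (\<lambda>_. density \<mu> (\<lambda>x. ennreal (q x))))"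
proof -
  let ?PQ = "PiM {..<N} (\<lambda>_. density \<mu> (\<lambda>x. ennreal (q x)))"
  have prm: "pr T h \<in> borel_measurable \<mu>" using dens_pr(1)[OF T h] .
  have avm: "(\<lambda>p. avg N T (fst p) (snd p)) \<in> borel_measurable (?PQ \<Otimes>\<^sub>M \<mu>)"
    by (rule avg_pair_meas[OF T])
  have "(\<lambda>p. pr T h (snd p)) \<in> borel_measurable (?PQ \<Otimes>\<^sub>M \<mu>)"
    by (rule measurable_compose[OF measurable_snd prm])
  then have "(\<lambda>p. ennreal \<bar>avg N T (fst p) (snd p) - pr T h (snd p)\<bar>) \<in> borel_measurable (?PQ \<Otimes>\<^sub>M \<mu>)"
    using avm by measurable
  then have "(\<lambda>(xs, z). ennreal \<bar>avg N T xs z - pr T h z\<bar>) \<in> borel_measurable (?PQ \<Otimes>\<^sub>M \<mu>)"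
    by (simp add: case_prod_beta')
  then show ?thesis unfolding L1_dist_def by (rule borel_measurable_nn_integral)
qed

lemma g1_bound1:
  assumes T: "1 \<le> T" and M: "0 \<le> M"
  shows "(\<integral>\<^sup>+z. ennreal (a T x z - min (a T x z) M) \<partial>\<mu>) \<le> 1"
proof -
  have "(\<integral>\<^sup>+z. ennreal (a T x z - min (a T x z) M) \<partial>\<mu>) \<le> (\<integral>\<^sup>+z. ennreal (a T x z) \<partial>\<mu>)"
    using a_nonneg T M by (intro nn_integral_mono ennreal_leI) auto
  then show ?thesis using a_int T by simp
qed

lemma g1_bound2:
  assumes T: "1 \<le> T"
  shows "(\<integral>\<^sup>+z. ennreal (a T x z) * indicator (- S) z \<partial>\<mu>) \<le> 1"
proof -
  have "(\<integral>\<^sup>+z. ennreal (a T x z) * indicator (- S) z \<partial>\<mu>) \<le> (\<integral>\<^sup>+z. ennreal (a T x z) \<partial>\<mu>)"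
    by (intro nn_integral_mono) (auto simp: indicator_def)
  then show ?thesis using a_int T by simp
qed

lemma core:
  assumes T: "1 \<le> T" and h: "dens \<mu> h" and eps: "0 < \<epsilon>" and gam: "0 < \<gamma>"
  shows "\<exists>\<delta>>0. \<exists>N0. \<forall>N\<ge>N0. \<forall>q. dens \<mu> q \<and> L1_dist \<mu> q h \<le> ennreal \<delta> \<longrightarrow>
    emeasure (PiM {..<N} (\<lambda>_. density \<mu> (\<lambda>x. ennreal (q x))))
      {xs \<in> space (PiM {..<N} (\<lambda>_. density \<mu> (\<lambda>x. ennreal (q x)))).
        ennreal \<epsilon> < L1_dist \<mu> (mc_dens \<mu> a b y N T xs) (nrm T (pr T h))} \<le> ennreal \<gamma>"
proof -
  have hm: "h \<in> borel_measurable \<mu>" and h0: "\<And>x. 0 \<le> h x" using h unfolding dens_def by auto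
  note ph = dens_pr[OF T h]
  define K where "K = 2 * C T (y T) / Z T (pr T h)"
  have Kp: "0 < K" unfolding K_def using C_pos[of T] Z_pos[OF T ph] by simp
  define \<rho> where "\<rho> = \<gamma> * \<epsilon> / K"
  have rp: "0 < \<rho>" unfolding \<rho>_def using Kp eps gam by simp
  obtain M where M: "0 \<le> M"
    and R1h: "(\<integral>\<^sup>+p. ennreal (h (fst p)) * ennreal (a T (fst p) (snd p) - min (a T (fst p) (snd p)) M) \<partial>(\<mu> \<Otimes>\<^sub>M \<mu>)) < ennreal (\<rho>/20)"
    using choose_M[OF T h, of "\<rho>/20"] rp by auto
  obtain S where S: "S \<in> sets \<mu>" "emeasure \<mu> S < \<infinity>"
    and R2h: "(\<integral>\<^sup>+p. ennreal (h (fst p)) * (ennreal (a T (fst p) (snd p)) * indicator (- S) (snd p)) \<partial>(\<mu> \<Otimes>\<^sub>M \<mu>)) < ennreal (\<rho>/20)"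
    using choose_S[OF T h, of "\<rho>/20"] rp by auto
  define s where "s = enn2real (emeasure \<mu> S)"
  have s0: "0 \<le> s" unfolding s_def by simp
  have muS: "emeasure \<mu> S = ennreal s" unfolding s_def using S(2) by (simp add: less_top ennreal_enn2real_if)
  define \<eta> where "\<eta> = \<rho> / (10 * (s + 1))"
  have etap: "0 < \<eta>" unfolding \<eta>_def using rp s0 by simp
  have etas: "\<eta> * s \<le> \<rho> / 10"
  proof -
    have "\<eta> * s = \<rho> / 10 * (s / (s + 1))" unfolding \<eta>_def using s0 by (simp add: field_simps)
    also have "\<dots> \<le> \<rho> / 10 * 1" using s0 rp by (intro mult_left_mono) auto
    finally show ?thesis by simp
  qed
  define \<delta> where "\<delta> = \<rho> / 20"
  define N0 where "N0 = Suc (nat \<lceil>10 * M / (\<eta> * \<rho>)\<rceil>)"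
  have "\<forall>N\<ge>N0. \<forall>q. dens \<mu> q \<and> L1_dist \<mu> q h \<le> ennreal \<delta> \<longrightarrow>
    emeasure (PiM {..<N} (\<lambda>_. density \<mu> (\<lambda>x. ennreal (q x))))
      {xs \<in> space (PiM {..<N} (\<lambda>_. density \<mu> (\<lambda>x. ennreal (q x)))).
        ennreal \<epsilon> < L1_dist \<mu> (mc_dens \<mu> a b y N T xs) (nrm T (pr T h))} \<le> ennreal \<gamma>"
  proof (intro allI impI, elim conjE)
    fix N q assume NN0: "N0 \<le> N" and q: "dens \<mu> q" and qh: "L1_dist \<mu> q h \<le> ennreal \<delta>"
    let ?P = "density \<mu> (\<lambda>x. ennreal (q x))"
    let ?PQ = "PiM {..<N} (\<lambda>_. ?P)"
    have P: "prob_space ?P" by (rule prob_density[OF q])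
    interpret PQ: prob_space ?PQ by (intro prob_space_PiM) (auto simp: P)
    have qm: "q \<in> borel_measurable \<mu>" and q0: "\<And>x. 0 \<le> q x" using q unfolding dens_def by auto
    note pq = dens_pr[OF T q]
    have N: "1 \<le> N" using NN0 unfolding N0_def by simp
    have NM: "M / (real N * \<eta>) \<le> \<rho> / 10"
    proof -
      have "10 * M / (\<eta> * \<rho>) \<le> real N" using NN0 unfolding N0_def by linarith
      then have "10 * M \<le> real N * (\<eta> * \<rho>)" using etap rp by (simp add: divide_le_eq)
      then show ?thesis using etap rp N by (simp add: divide_le_eq field_simps)
    qed
    define u where "u xs = L1_dist \<mu> (avg N T xs) (pr T h)" for xs
    have um: "u \<in> borel_measurable ?PQ" unfolding u_def by (rule u_meas[OF T h])
    define c where "c = ennreal (K / \<epsilon>)"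
    have sub: "{xs \<in> space ?PQ. ennreal \<epsilon> < L1_dist \<mu> (mc_dens \<mu> a b y N T xs) (nrm T (pr T h))}
       \<subseteq> {xs \<in> space ?PQ. 1 \<le> c * u xs}"
    proof safe
      fix xs assume xs: "xs \<in> space ?PQ" and lt: "ennreal \<epsilon> < L1_dist \<mu> (mc_dens \<mu> a b y N T xs) (nrm T (pr T h))"
      have "L1_dist \<mu> (mc_dens \<mu> a b y N T xs) (nrm T (pr T h)) \<le> ennreal K * u xs"
        unfolding mc_dens_nrm u_def K_def by (rule nrm_L1[OF T avg_props[OF T N] ph])
      with lt have "ennreal \<epsilon> < ennreal K * u xs" by simp
      then have "ennreal (1 / \<epsilon>) * ennreal \<epsilon> \<le> ennreal (1 / \<epsilon>) * (ennreal K * u xs)"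
        by (intro mult_left_mono) auto
      moreover have "ennreal (1 / \<epsilon>) * ennreal \<epsilon> = 1" using eps by (simp add: ennreal_mult[symmetric])
      moreover have "ennreal (1 / \<epsilon>) * (ennreal K * u xs) = c * u xs"
      proof -
        have "ennreal (1 / \<epsilon>) * ennreal K = ennreal (K / \<epsilon>)"
          using eps ennreal_mult'[of "1 / \<epsilon>" K] by simp
        then show ?thesis unfolding c_def by (metis mult.assoc)
      qed
      ultimately show "1 \<le> c * u xs" by simp
    qed
    have "emeasure ?PQ {xs \<in> space ?PQ. ennreal \<epsilon> < L1_dist \<mu> (mc_dens \<mu> a b y N T xs) (nrm T (pr T h))}
       \<le> emeasure ?PQ {xs \<in> space ?PQ. 1 \<le> c * u xs}"
      using sub um by (intro emeasure_mono) auto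
    also have "\<dots> \<le> c * (\<integral>\<^sup>+xs. u xs * indicator (space ?PQ) xs \<partial>?PQ)"
      using um by (intro nn_integral_Markov_inequality) auto
    also have "(\<integral>\<^sup>+xs. u xs * indicator (space ?PQ) xs \<partial>?PQ) = (\<integral>\<^sup>+xs. u xs \<partial>?PQ)"
      by (intro nn_integral_cong) auto
    also have "(\<integral>\<^sup>+xs. u xs \<partial>?PQ) \<le> ennreal \<rho>"
    proof -
      have um2: "(\<lambda>xs. L1_dist \<mu> (avg N T xs) (pr T q)) \<in> borel_measurable ?PQ" by (rule u_meas[OF T q])
      have "(\<integral>\<^sup>+xs. u xs \<partial>?PQ) \<le> (\<integral>\<^sup>+xs. L1_dist \<mu> (avg N T xs) (pr T q) + L1_dist \<mu> (pr T q) (pr T h) \<partial>?PQ)"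
        unfolding u_def by (intro nn_integral_mono L1_dist_tri avg_props[OF T N] pq(1) ph(1))
      also have "\<dots> = (\<integral>\<^sup>+xs. L1_dist \<mu> (avg N T xs) (pr T q) \<partial>?PQ) + L1_dist \<mu> (pr T q) (pr T h)"
        using um2 by (simp add: nn_integral_add PQ.emeasure_space_1)
      also have "(\<integral>\<^sup>+xs. L1_dist \<mu> (avg N T xs) (pr T q) \<partial>?PQ)
          \<le> ennreal \<eta> * emeasure \<mu> S + ennreal (M / (real N * \<eta>))
             + 2 * (\<integral>\<^sup>+z. Rz T q M z \<partial>\<mu>) + 2 * (\<integral>\<^sup>+z. prn T q z * indicator (- S) z \<partial>\<mu>)"
        by (rule LLN_total[OF T q N M etap S(1)])
      also have "L1_dist \<mu> (pr T q) (pr T h) \<le> ennreal (\<rho>/20)"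
        using pr_L1[OF T q h] qh unfolding \<delta>_def by simp
      also have "ennreal \<eta> * emeasure \<mu> S \<le> ennreal (\<rho>/10)"
        unfolding muS using etap s0 etas by (simp add: ennreal_mult[symmetric] ennreal_leI)
      also have "ennreal (M / (real N * \<eta>)) \<le> ennreal (\<rho>/10)"
        using NM by (rule ennreal_leI)
      also have "(\<integral>\<^sup>+z. Rz T q M z \<partial>\<mu>) \<le> ennreal (\<rho>/20) + ennreal (\<rho>/20)"
      proof -
        have "(\<integral>\<^sup>+z. Rz T q M z \<partial>\<mu>)
          \<le> (\<integral>\<^sup>+p. ennreal (h (fst p)) * ennreal (a T (fst p) (snd p) - min (a T (fst p) (snd p)) M) \<partial>(\<mu> \<Otimes>\<^sub>M \<mu>))
             + L1_dist \<mu> q h"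
          unfolding R1_eq[OF T qm q0]
        proof (rule unif[OF _ _ qm hm])
          show "(\<lambda>p. ennreal (a T (fst p) (snd p) - min (a T (fst p) (snd p)) M)) \<in> borel_measurable (\<mu> \<Otimes>\<^sub>M \<mu>)"
            using pair_meas[OF T] by measurable
          show "\<And>x. (\<integral>\<^sup>+z. ennreal (a T (fst (x, z)) (snd (x, z)) - min (a T (fst (x, z)) (snd (x, z))) M) \<partial>\<mu>) \<le> 1"
            using g1_bound1[OF T M] by simp
        qed
        also have "\<dots> \<le> ennreal (\<rho>/20) + ennreal (\<rho>/20)"
          using R1h qh unfolding \<delta>_def by (intro add_mono) auto
        finally show ?thesis .
      qed
      also have "(\<integral>\<^sup>+z. prn T q z * indicator (- S) z \<partial>\<mu>) \<le> ennreal (\<rho>/20) + ennreal (\<rho>/20)"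
      proof -
        have cS: "- S \<in> sets \<mu>" using S(1) sets.compl_sets[of S \<mu>] by (simp add: Compl_eq_Diff_UNIV)
        have "(\<integral>\<^sup>+z. prn T q z * indicator (- S) z \<partial>\<mu>)
          \<le> (\<integral>\<^sup>+p. ennreal (h (fst p)) * (ennreal (a T (fst p) (snd p)) * indicator (- S) (snd p)) \<partial>(\<mu> \<Otimes>\<^sub>M \<mu>))
             + L1_dist \<mu> q h"
          unfolding R2_eq[OF T qm q0 S(1)]
        proof (rule unif[OF _ _ qm hm])
          show "(\<lambda>p. ennreal (a T (fst p) (snd p)) * indicator (- S) (snd p)) \<in> borel_measurable (\<mu> \<Otimes>\<^sub>M \<mu>)"
            using pair_meas[OF T] cS by measurable
          show "\<And>x. (\<integral>\<^sup>+z. ennreal (a T (fst (x, z)) (snd (x, z))) * indicator (- S) (snd (x, z)) \<partial>\<mu>) \<le> 1"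
            using g1_bound2[OF T] by simp
        qed
        also have "\<dots> \<le> ennreal (\<rho>/20) + ennreal (\<rho>/20)"
          using R2h qh unfolding \<delta>_def by (intro add_mono) auto
        finally show ?thesis .
      qed
      finally have "(\<integral>\<^sup>+xs. u xs \<partial>?PQ) \<le> ennreal (\<rho>/10) + ennreal (\<rho>/10)
          + 2 * (ennreal (\<rho>/20) + ennreal (\<rho>/20)) + 2 * (ennreal (\<rho>/20) + ennreal (\<rho>/20)) + ennreal (\<rho>/20)"
        by (simp add: add_mono mult_left_mono)
      also have "\<dots> = ennreal (\<rho>/10 + \<rho>/10 + 2 * (\<rho>/20 + \<rho>/20) + 2 * (\<rho>/20 + \<rho>/20) + \<rho>/20)"
      proof -
        have two: "\<And>x. 0 \<le> x \<Longrightarrow> (2::ennreal) * ennreal x = ennreal (2 * x)"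
          by (simp add: ennreal_mult')
        show ?thesis using rp
          by (simp add: ennreal_plus[symmetric] two del: ennreal_plus)
      qed
      also have "\<dots> \<le> ennreal \<rho>" using rp by (intro ennreal_leI) simp
      finally show ?thesis .
    qed
    also have "c * ennreal \<rho> = ennreal \<gamma>"
      unfolding c_def \<rho>_def using Kp eps gam by (simp add: ennreal_mult[symmetric])
    finally show "emeasure ?PQ {xs \<in> space ?PQ. ennreal \<epsilon> < L1_dist \<mu> (mc_dens \<mu> a b y N T xs) (nrm T (pr T h))}
       \<le> ennreal \<gamma>" by (simp add: mult_left_mono)
  qed
  then show ?thesis using rp unfolding \<delta>_def by (intro exI[of _ "\<rho>/20"]) auto
qed

end


context ssm begin

lemma comp_meas_gen:
  assumes R: "sets R = sets (PiM {..<N} (\<lambda>_. \<mu>))" and j: "j < N"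
  shows "(\<lambda>w. w j) \<in> measurable R \<mu>"
proof -
  have e: "measurable R \<mu> = measurable (PiM {..<N} (\<lambda>_. \<mu>)) \<mu>" by (rule measurable_cong_sets[OF R refl])
  show ?thesis unfolding e using measurable_component_singleton[of j "{..<N}" "\<lambda>_. \<mu>"] j by simp
qed

lemma avg_joint:
  assumes T: "1 \<le> T" and R: "sets R = sets (PiM {..<N} (\<lambda>_. \<mu>))"
  shows "(\<lambda>p. avg N T (fst p) (snd p)) \<in> borel_measurable (R \<Otimes>\<^sub>M \<mu>)"
proof -
  have "(\<lambda>p. a T (fst p j) (snd p)) \<in> borel_measurable (R \<Otimes>\<^sub>M \<mu>)" if "j < N" for j
  proof (rule a_comp[OF T])
    show "(\<lambda>p. fst p j) \<in> measurable (R \<Otimes>\<^sub>M \<mu>) \<mu>"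
      by (rule measurable_compose[OF measurable_fst comp_meas_gen[OF R that]])
  qed simp
  then have "(\<lambda>p. \<Sum>j<N. a T (fst p j) (snd p)) \<in> borel_measurable (R \<Otimes>\<^sub>M \<mu>)"
    by (intro borel_measurable_sum) auto
  then show ?thesis unfolding avg_def by measurable
qed

lemma Zavg_meas:
  assumes T: "1 \<le> T" and R: "sets R = sets (PiM {..<N} (\<lambda>_. \<mu>))"
  shows "(\<lambda>w. Z T (avg N T w)) \<in> borel_measurable R"
proof -
  have bm: "(\<lambda>p. b T (snd p) (y T)) \<in> borel_measurable (R \<Otimes>\<^sub>M \<mu>)"
    by (rule measurable_compose[OF measurable_snd b_comp[OF T]])
  have "(\<lambda>p. b T (snd p) (y T) * avg N T (fst p) (snd p)) \<in> borel_measurable (R \<Otimes>\<^sub>M \<mu>)"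
    using bm avg_joint[OF T R] by measurable
  then have "case_prod (\<lambda>w z. b T z (y T) * avg N T w z) \<in> borel_measurable (R \<Otimes>\<^sub>M \<mu>)"
    by (simp add: case_prod_beta')
  then have "(\<lambda>w. \<integral>z. b T z (y T) * avg N T w z \<partial>\<mu>) \<in> borel_measurable R"
    by (rule borel_measurable_lebesgue_integral)
  then show ?thesis unfolding Z_def .
qed

lemma mc_joint:
  assumes T: "1 \<le> T" and R: "sets R = sets (PiM {..<N} (\<lambda>_. \<mu>))"
  shows "(\<lambda>p. mc_dens \<mu> a b y N T (fst p) (snd p)) \<in> borel_measurable (R \<Otimes>\<^sub>M \<mu>)"
proof -
  have bm: "(\<lambda>p. b T (snd p) (y T)) \<in> borel_measurable (R \<Otimes>\<^sub>M \<mu>)"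
    by (rule measurable_compose[OF measurable_snd b_comp[OF T]])
  have zm: "(\<lambda>p. Z T (avg N T (fst p))) \<in> borel_measurable (R \<Otimes>\<^sub>M \<mu>)"
    by (rule measurable_compose[OF measurable_fst Zavg_meas[OF T R]])
  show ?thesis unfolding mc_dens_nrm nrm_Z using bm zm avg_joint[OF T R] by measurable
qed

lemma filtN_joint:
  assumes R: "sets R = sets (PiM {..<N} (\<lambda>_. \<mu>))"
  shows "(\<lambda>p. filtN \<mu> a0 a b y N t (fst p) (snd p)) \<in> borel_measurable (R \<Otimes>\<^sub>M \<mu>)"
proof (cases "t = 0")
  case True
  then show ?thesis unfolding filtN_def using measurable_compose[OF measurable_snd a0_meas] by simp
next
  case False
  then show ?thesis unfolding filtN_def using mc_joint[OF _ R, of t] by simp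
qed

lemma filtN_dens:
  assumes N: "1 \<le> N"
  shows "dens \<mu> (filtN \<mu> a0 a b y N t w)"
proof (cases "t = 0")
  case True
  then show ?thesis unfolding filtN_def dens_def using a0_meas a0_nonneg a0_int by simp
next
  case False
  then have T: "1 \<le> t" by simp
  show ?thesis unfolding filtN_def mc_dens_nrm using False dens_nrm[OF T avg_props[OF T N]] by simp
qed

lemma L1_meas:
  assumes R: "sets R = sets (PiM {..<N} (\<lambda>_. \<mu>))" and g: "g \<in> borel_measurable \<mu>"
  shows "(\<lambda>w. L1_dist \<mu> (filtN \<mu> a0 a b y N t w) g) \<in> borel_measurable R"
proof -
  have gm: "(\<lambda>p. g (snd p)) \<in> borel_measurable (R \<Otimes>\<^sub>M \<mu>)"
    by (rule measurable_compose[OF measurable_snd g])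
  have "(\<lambda>p. ennreal \<bar>filtN \<mu> a0 a b y N t (fst p) (snd p) - g (snd p)\<bar>) \<in> borel_measurable (R \<Otimes>\<^sub>M \<mu>)"
    using gm filtN_joint[OF R] by measurable
  then have "(\<lambda>(w, x). ennreal \<bar>filtN \<mu> a0 a b y N t w x - g x\<bar>) \<in> borel_measurable (R \<Otimes>\<^sub>M \<mu>)"
    by (simp add: case_prod_beta')
  then show ?thesis unfolding L1_dist_def by (rule borel_measurable_nn_integral)
qed

end


context ssm begin

lemma kernel_meas:
  assumes R: "sets R = sets (PiM {..<N} (\<lambda>_. \<mu>))"
    and Qm: "(\<lambda>p. Q (fst p) (snd p)) \<in> borel_measurable (R \<Otimes>\<^sub>M \<mu>)"
    and Qd: "\<And>w. dens \<mu> (Q w)"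
  shows "(\<lambda>w. PiM {..<N} (\<lambda>_. density \<mu> (\<lambda>x. ennreal (Q w x)))) \<in> measurable R (subprob_algebra (PiM {..<N} (\<lambda>_. \<mu>)))"
proof (rule measurable_subprob_algebra_generated[OF sets_PiM Int_stable_prod_algebra prod_algebra_sets_into_space])
  fix w
  have P: "prob_space (density \<mu> (\<lambda>x. ennreal (Q w x)))" by (rule prob_density[OF Qd])
  then have PP: "prob_space (PiM {..<N} (\<lambda>_. density \<mu> (\<lambda>x. ennreal (Q w x))))" by (intro prob_space_PiM) auto
  then show "subprob_space (PiM {..<N} (\<lambda>_. density \<mu> (\<lambda>x. ennreal (Q w x))))"
    by (rule prob_space_imp_subprob_space)
  show "sets (PiM {..<N} (\<lambda>_. density \<mu> (\<lambda>x. ennreal (Q w x)))) = sets (PiM {..<N} (\<lambda>_. \<mu>))"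
    by (intro sets_PiM_cong) auto
next
  have "emeasure (PiM {..<N} (\<lambda>_. density \<mu> (\<lambda>x. ennreal (Q w x)))) (\<Pi>\<^sub>E i\<in>{..<N}. space \<mu>) = 1" for w
  proof -
    have P: "prob_space (density \<mu> (\<lambda>x. ennreal (Q w x)))" by (rule prob_density[OF Qd])
    then interpret PP: prob_space "PiM {..<N} (\<lambda>_. density \<mu> (\<lambda>x. ennreal (Q w x)))" by (intro prob_space_PiM) auto
    show ?thesis using PP.emeasure_space_1 by (simp add: space_PiM)
  qed
  then show "(\<lambda>w. emeasure (PiM {..<N} (\<lambda>_. density \<mu> (\<lambda>x. ennreal (Q w x)))) (\<Pi>\<^sub>E i\<in>{..<N}. space \<mu>)) \<in> borel_measurable R"
    by simp
next
  fix A assume A: "A \<in> prod_algebra {..<N} (\<lambda>_. \<mu>)"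
  then obtain J E where AJ: "A = prod_emb {..<N} (\<lambda>_. \<mu>) J (\<Pi>\<^sub>E j\<in>J. E j)"
    and J: "finite J" "J \<subseteq> {..<N}" and E: "\<And>i. i \<in> J \<Longrightarrow> E i \<in> sets \<mu>"
    by (rule prod_algebraE) auto
  have eq: "emeasure (PiM {..<N} (\<lambda>_. density \<mu> (\<lambda>x. ennreal (Q w x)))) A
      = (\<Prod>i\<in>J. \<integral>\<^sup>+x. ennreal (Q w x) * indicator (E i) x \<partial>\<mu>)" for w
  proof -
    have P: "prob_space (density \<mu> (\<lambda>x. ennreal (Q w x)))" by (rule prob_density[OF Qd])
    have Qwm: "Q w \<in> borel_measurable \<mu>" using Qd[of w] unfolding dens_def by auto
    have "A = prod_emb {..<N} (\<lambda>_. density \<mu> (\<lambda>x. ennreal (Q w x))) J (\<Pi>\<^sub>E j\<in>J. E j)"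
      unfolding AJ by (simp add: prod_emb_def)
    then have "emeasure (PiM {..<N} (\<lambda>_. density \<mu> (\<lambda>x. ennreal (Q w x)))) A
        = (\<Prod>i\<in>J. emeasure (density \<mu> (\<lambda>x. ennreal (Q w x))) (E i))"
      using P J E by (simp add: emeasure_PiM_emb)
    also have "\<dots> = (\<Prod>i\<in>J. \<integral>\<^sup>+x. ennreal (Q w x) * indicator (E i) x \<partial>\<mu>)"
      using E Qwm by (intro prod.cong refl emeasure_density) auto
    finally show ?thesis .
  qed
  have "(\<lambda>w. \<Prod>i\<in>J. \<integral>\<^sup>+x. ennreal (Q w x) * indicator (E i) x \<partial>\<mu>) \<in> borel_measurable R"
  proof (rule borel_measurable_prod_ennreal)
    fix i assume i: "i \<in> J"
    have Ei: "E i \<in> sets \<mu>" by (rule E[OF i])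
    have "(\<lambda>p. ennreal (Q (fst p) (snd p)) * indicator (E i) (snd p)) \<in> borel_measurable (R \<Otimes>\<^sub>M \<mu>)"
      using Qm Ei by measurable
    then have "(\<lambda>(w, x). ennreal (Q w x) * indicator (E i) x) \<in> borel_measurable (R \<Otimes>\<^sub>M \<mu>)"
      by (simp add: case_prod_beta')
    then show "(\<lambda>w. \<integral>\<^sup>+x. ennreal (Q w x) * indicator (E i) x \<partial>\<mu>) \<in> borel_measurable R"
      by (rule borel_measurable_nn_integral)
  qed
  then show "(\<lambda>w. emeasure (PiM {..<N} (\<lambda>_. density \<mu> (\<lambda>x. ennreal (Q w x)))) A) \<in> borel_measurable R"
    unfolding eq .
qed

end


context ssm begin

lemma dens_a0: "dens \<mu> a0"
  unfolding dens_def using a0_meas a0_nonneg a0_int by simp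

lemma filt_dens: "dens \<mu> (filt \<mu> a0 a b y t)"
proof (induction t)
  case 0 then show ?case using dens_a0 by simp
next
  case (Suc t)
  have T: "1 \<le> Suc t" by simp
  show ?case unfolding filt_Suc by (rule dens_nrm[OF T dens_pr[OF T Suc]])
qed

lemma mc_dens_dens:
  assumes N: "1 \<le> N" and T: "1 \<le> T" shows "dens \<mu> (mc_dens \<mu> a b y N T w)"
  unfolding mc_dens_nrm by (rule dens_nrm[OF T avg_props[OF T N]])

lemma particles_facts:
  assumes N: "1 \<le> N"
  shows "prob_space (particles \<mu> a0 a b y N t) \<and> sets (particles \<mu> a0 a b y N t) = sets (PiM {..<N} (\<lambda>_. \<mu>))"
proof (induction t)
  case 0
  have P: "prob_space (density \<mu> (\<lambda>x. ennreal (a0 x)))" by (rule prob_density[OF dens_a0])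
  show ?case using P by (auto intro!: prob_space_PiM sets_PiM_cong)
next
  case (Suc t)
  let ?R = "particles \<mu> a0 a b y N t"
  let ?K = "\<lambda>xs. PiM {..<N} (\<lambda>_. density \<mu> (\<lambda>x. ennreal (mc_dens \<mu> a b y N (Suc t) xs x)))"
  have R: "prob_space ?R" and Rs: "sets ?R = sets (PiM {..<N} (\<lambda>_. \<mu>))" using Suc by auto
  have Km: "?K \<in> measurable ?R (subprob_algebra (PiM {..<N} (\<lambda>_. \<mu>)))"
    by (rule kernel_meas[OF Rs mc_joint[OF _ Rs] mc_dens_dens[OF N]]) simp_all
  have Kp: "prob_space (?K w)" for w
    using prob_density[OF mc_dens_dens[OF N, of "Suc t" w]] by (intro prob_space_PiM) auto
  interpret R: prob_space ?R by (rule R)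
  have "prob_space (?R \<bind> ?K)" by (rule R.prob_space_bind[OF _ Km]) (auto intro!: AE_I2 Kp)
  moreover have "sets (?R \<bind> ?K) = sets (PiM {..<N} (\<lambda>_. \<mu>))"
    by (rule sets_bind) (auto intro!: sets_PiM_cong simp: R.not_empty)
  ultimately show ?case by simp
qed

lemma emeasure_part:
  assumes N: "1 \<le> N" and A: "A \<in> sets (PiM {..<N} (\<lambda>_. \<mu>))"
  shows "emeasure (particles \<mu> a0 a b y N s) A
    = (\<integral>\<^sup>+w. emeasure (PiM {..<N} (\<lambda>_. density \<mu> (\<lambda>x. ennreal (filtN \<mu> a0 a b y N s w x)))) A
         \<partial>particles \<mu> a0 a b y N (s - 1))"
proof (cases s)
  case 0
  interpret R: prob_space "particles \<mu> a0 a b y N 0" by (rule conjunct1[OF particles_facts[OF N]])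
  show ?thesis using 0 R.emeasure_space_1 by (simp add: filtN_def)
next
  case (Suc r)
  let ?R = "particles \<mu> a0 a b y N r"
  let ?K = "\<lambda>xs. PiM {..<N} (\<lambda>_. density \<mu> (\<lambda>x. ennreal (mc_dens \<mu> a b y N (Suc r) xs x)))"
  have R: "prob_space ?R" and Rs: "sets ?R = sets (PiM {..<N} (\<lambda>_. \<mu>))" using particles_facts[OF N] by auto
  interpret R: prob_space ?R by (rule R)
  have Km: "?K \<in> measurable ?R (subprob_algebra (PiM {..<N} (\<lambda>_. \<mu>)))"
    by (rule kernel_meas[OF Rs mc_joint[OF _ Rs] mc_dens_dens[OF N]]) simp_all
  show ?thesis using Suc emeasure_bind[OF R.not_empty Km A] by (simp add: filtN_def)
qed

lemma filt_meas: "filt \<mu> a0 a b y t \<in> borel_measurable \<mu>"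
  using filt_dens unfolding dens_def by auto

lemma conv:
  assumes "0 < \<epsilon>"
  shows "(\<lambda>N. measure (particles \<mu> a0 a b y N (t - 1))
        {xs \<in> space (particles \<mu> a0 a b y N (t - 1)).
           ennreal \<epsilon> < L1_dist \<mu> (filtN \<mu> a0 a b y N t xs) (filt \<mu> a0 a b y t)}) \<longlonglongrightarrow> 0"
  using assms
proof (induction t arbitrary: \<epsilon>)
  case 0
  then show ?case by (simp add: filtN_def L1_dist_def)
next
  case (Suc s)
  have T: "1 \<le> Suc s" by simp
  define h where "h = filt \<mu> a0 a b y s"
  have h: "dens \<mu> h" unfolding h_def by (rule filt_dens)
  have fS: "filt \<mu> a0 a b y (Suc s) = nrm (Suc s) (pr (Suc s) h)" unfolding h_def by (rule filt_Suc)
  show ?case unfolding diff_Suc_1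
  proof (rule LIMSEQ_I)
    fix r :: real assume r: "0 < r"
    define \<gamma> where "\<gamma> = r / 3"
    have gam: "0 < \<gamma>" unfolding \<gamma>_def using r by simp
    obtain \<delta> N0 where del: "0 < \<delta>" and core': "\<forall>N\<ge>N0. \<forall>q. dens \<mu> q \<and> L1_dist \<mu> q h \<le> ennreal \<delta> \<longrightarrow>
      emeasure (PiM {..<N} (\<lambda>_. density \<mu> (\<lambda>x. ennreal (q x))))
        {xs \<in> space (PiM {..<N} (\<lambda>_. density \<mu> (\<lambda>x. ennreal (q x)))).
          ennreal \<epsilon> < L1_dist \<mu> (mc_dens \<mu> a b y N (Suc s) xs) (nrm (Suc s) (pr (Suc s) h))} \<le> ennreal \<gamma>"
      using core[OF T h Suc.prems gam] by blast
    obtain N1 where N1: "\<forall>N\<ge>N1. norm (measure (particles \<mu> a0 a b y N (s - 1))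
        {w \<in> space (particles \<mu> a0 a b y N (s - 1)).
           ennreal \<delta> < L1_dist \<mu> (filtN \<mu> a0 a b y N s w) h} - 0) < \<gamma>"
      using LIMSEQ_D[OF Suc.IH[OF del] gam] unfolding h_def by blast
    show "\<exists>no. \<forall>N\<ge>no. norm (measure (particles \<mu> a0 a b y N s)
        {xs \<in> space (particles \<mu> a0 a b y N s).
           ennreal \<epsilon> < L1_dist \<mu> (filtN \<mu> a0 a b y N (Suc s) xs) (filt \<mu> a0 a b y (Suc s))} - 0) < r"
    proof (intro exI[of _ "max (max N0 N1) 1"] allI impI)
      fix N assume NN: "max (max N0 N1) 1 \<le> N"
      have N: "1 \<le> N" and NN0: "N0 \<le> N" and NN1: "N1 \<le> N" using NN by auto
      let ?R = "particles \<mu> a0 a b y N s"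
      let ?R' = "particles \<mu> a0 a b y N (s - 1)"
      have R: "prob_space ?R" and Rs: "sets ?R = sets (PiM {..<N} (\<lambda>_. \<mu>))" using particles_facts[OF N] by auto
      have R': "prob_space ?R'" and R's: "sets ?R' = sets (PiM {..<N} (\<lambda>_. \<mu>))" using particles_facts[OF N] by auto
      interpret R: prob_space ?R by (rule R)
      interpret R': prob_space ?R' by (rule R')
      define E where "E = {xs \<in> space ?R. ennreal \<epsilon> < L1_dist \<mu> (filtN \<mu> a0 a b y N (Suc s) xs) (filt \<mu> a0 a b y (Suc s))}"
      define B where "B = {w \<in> space ?R'. ennreal \<delta> < L1_dist \<mu> (filtN \<mu> a0 a b y N s w) h}"
      have Lm: "(\<lambda>xs. L1_dist \<mu> (filtN \<mu> a0 a b y N (Suc s) xs) (filt \<mu> a0 a b y (Suc s))) \<in> borel_measurable ?R"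
        by (rule L1_meas[OF Rs filt_meas])
      have ER: "E \<in> sets ?R" unfolding E_def using Lm by measurable
      have EP: "E \<in> sets (PiM {..<N} (\<lambda>_. \<mu>))" using ER Rs by simp
      have hm: "h \<in> borel_measurable \<mu>" using h unfolding dens_def by auto
      have Lm': "(\<lambda>w. L1_dist \<mu> (filtN \<mu> a0 a b y N s w) h) \<in> borel_measurable ?R'"
        by (rule L1_meas[OF R's hm])
      have BR: "B \<in> sets ?R'" unfolding B_def using Lm' by measurable
      have spR: "space ?R = space (PiM {..<N} (\<lambda>_. \<mu>))" by (rule sets_eq_imp_space_eq[OF Rs])
      have "emeasure ?R E = (\<integral>\<^sup>+w. emeasure (PiM {..<N} (\<lambda>_. density \<mu> (\<lambda>x. ennreal (filtN \<mu> a0 a b y N s w x)))) E \<partial>?R')"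
        by (rule emeasure_part[OF N EP])
      also have "\<dots> \<le> (\<integral>\<^sup>+w. ennreal \<gamma> + indicator B w \<partial>?R')"
      proof (intro nn_integral_mono)
        fix w assume w: "w \<in> space ?R'"
        define q where "q = filtN \<mu> a0 a b y N s w"
        have q: "dens \<mu> q" unfolding q_def by (rule filtN_dens[OF N])
        let ?K = "PiM {..<N} (\<lambda>_. density \<mu> (\<lambda>x. ennreal (q x)))"
        have K: "prob_space ?K" using prob_density[OF q] by (intro prob_space_PiM) auto
        interpret K: prob_space ?K by (rule K)
        show "emeasure ?K E \<le> ennreal \<gamma> + indicator B w"
        proof (cases "w \<in> B")
          case True
          have "emeasure ?K E \<le> 1" by (rule K.emeasure_le_1)
          also have "\<dots> \<le> ennreal \<gamma> + indicator B w" using True by simp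
          finally show ?thesis .
        next
          case False
          then have qh: "L1_dist \<mu> q h \<le> ennreal \<delta>" unfolding B_def q_def using w by auto
          have spK: "space ?K = space (PiM {..<N} (\<lambda>_. \<mu>))" by (intro sets_eq_imp_space_eq sets_PiM_cong) auto
          have "E = {xs \<in> space ?K. ennreal \<epsilon> < L1_dist \<mu> (mc_dens \<mu> a b y N (Suc s) xs) (nrm (Suc s) (pr (Suc s) h))}"
            unfolding E_def spR spK fS by (simp add: filtN_def)
          then have "emeasure ?K E \<le> ennreal \<gamma>" using core' NN0 q qh by auto
          then show ?thesis by (simp add: add_increasing2)
        qed
      qed
      also have "\<dots> = ennreal \<gamma> + emeasure ?R' B"
        using BR R'.emeasure_space_1 by (simp add: nn_integral_add)
      finally have le: "emeasure ?R E \<le> ennreal \<gamma> + emeasure ?R' B" .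
      have le2: "ennreal (measure ?R E) \<le> ennreal \<gamma> + ennreal (measure ?R' B)"
        using le unfolding R.emeasure_eq_measure R'.emeasure_eq_measure .
      have m0: "0 \<le> measure ?R' B" by (rule measure_nonneg)
      have pl: "ennreal \<gamma> + ennreal (measure ?R' B) = ennreal (\<gamma> + measure ?R' B)"
        by (rule ennreal_plus[symmetric]) (use gam m0 in auto)
      have "ennreal (measure ?R E) \<le> ennreal (\<gamma> + measure ?R' B)"
        using le2 unfolding pl .
      then have mE: "measure ?R E \<le> \<gamma> + measure ?R' B"
        by (subst (asm) ennreal_le_iff) (use gam m0 in auto)
      have mB: "measure ?R' B < \<gamma>" using N1 NN1 unfolding B_def by auto
      have "measure ?R E < r" using mE mB r unfolding \<gamma>_def by linarith
      then have "norm (measure ?R E - 0) < r" by simp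
      then show "norm (measure ?R {xs \<in> space ?R. ennreal \<epsilon> < L1_dist \<mu> (filtN \<mu> a0 a b y N (Suc s) xs) (filt \<mu> a0 a b y (Suc s))} - 0) < r"
        unfolding E_def .
    qed
  qed
qed

end


theorem theorem1:
  fixes \<mu> :: "'a::polish_space measure" and \<nu> :: "'b measure"
    and a0 :: "'a \<Rightarrow> real" and a :: "nat \<Rightarrow> 'a \<Rightarrow> 'a \<Rightarrow> real"
    and b :: "nat \<Rightarrow> 'a \<Rightarrow> 'b \<Rightarrow> real" and C :: "nat \<Rightarrow> 'b \<Rightarrow> real"
    and y :: "nat \<Rightarrow> 'b"
  assumes sets_mu: "sets \<mu> = sets borel"
    and sf_mu: "sigma_finite_measure \<mu>"
    and sf_nu: "sigma_finite_measure \<nu>"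
    and a0_meas: "a0 \<in> borel_measurable \<mu>"
    and a0_nonneg: "\<forall>x. 0 \<le> a0 x"
    and a0_int: "(\<integral>\<^sup>+x. ennreal (a0 x) \<partial>\<mu>) = 1"
    and a_meas: "\<forall>t\<ge>1. (\<lambda>(x', x). a t x' x) \<in> borel_measurable (\<mu> \<Otimes>\<^sub>M \<mu>)"
    and a_nonneg: "\<forall>t\<ge>1. \<forall>x' x. 0 \<le> a t x' x"
    and a_int: "\<forall>t\<ge>1. \<forall>x'. (\<integral>\<^sup>+x. ennreal (a t x' x) \<partial>\<mu>) = 1"
    and a_cont: "\<forall>t\<ge>1. \<forall>x0. ((\<lambda>x. \<integral>z. \<bar>a t x z - a t x0 z\<bar> \<partial>\<mu>) \<longlongrightarrow> 0) (at x0)"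
    and b_meas: "\<forall>t\<ge>1. (\<lambda>(x, v). b t x v) \<in> borel_measurable (\<mu> \<Otimes>\<^sub>M \<nu>)"
    and b_int: "\<forall>t\<ge>1. \<forall>x. (\<integral>\<^sup>+v. ennreal (b t x v) \<partial>\<nu>) = 1"
    and b_bound: "\<forall>t x v. 0 < b t x v \<and> b t x v \<le> C t v"
    and y_space: "\<forall>t. y t \<in> space \<nu>"
  shows "\<forall>t. \<forall>\<epsilon>>0.
    ((\<lambda>N. measure (particles \<mu> a0 a b y N (t - 1))
        {xs \<in> space (particles \<mu> a0 a b y N (t - 1)).
           ennreal \<epsilon> < L1_dist \<mu> (filtN \<mu> a0 a b y N t xs) (filt \<mu> a0 a b y t)})
      \<longlongrightarrow> 0) sequentially"
  proof -
  interpret ssm \<mu> \<nu> a0 a b C y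
    unfolding ssm_def ssm_axioms_def
    using sf_mu sets_mu a0_meas a0_nonneg a0_int a_meas a_nonneg a_int b_meas b_bound y_space
    by auto
  show ?thesis using conv by blast
qed

end
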